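(* Let $Q$ be a quadrangulation with a distinguished vertex $s_0$ on its outer face. Then there is a bijection between the $2$-orientations of $Q$ and the strong labelings of $Q$ (with special vertex $s_0$).
   Context: A quadrangulation is a simple plane graph with at least four vertices all of whose faces (including the outer face) are bounded by $4$-cycles; it is bipartite. Color the vertices properly black and white so that $s_0$ is black, and let $s_1$ be the other black vertex on the outer face (the one opposite to $s_0$). An angle is an incidence of a vertex with a face. A strong labeling of $Q$ is a map from the angles of $Q$ to $\{0,1\}$ such that: (G0) all angles at $s_i$ are labeled $i$; (G1) for each vertex $v\notin\{s_0,s_1\}$ the labels around $v$ form one non-empty cyclic interval of $1$s and one non-empty cyclic interval of $0$s; (G2) for each edge, the two labels on the two sides of the edge coincide at one endpoint and differ at the other; (G3) the labels in each bounded face, read cyclically, are $0,0,1,1$, and reading the labels of the outer face in clockwise order starting at $s_0$ they are $0,0,1,1$. A $2$-orientation of $Q$ is an orientation of its edges in which every vertex other than $s_0,s_1$ has outdegree exactly $2$. *)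

theory Defs
  imports "HOL-Combinatorics.Permutations" "HOL-Library.FuncSet"
begin

text \<open>
  Plane graphs are represented as combinatorial maps (rotation systems).
  A map is given by a finite set of darts D (half-edges), a fixed-point-free
  involution alpha on D (the two darts of an edge) and a permutation sigma of D
  (the counterclockwise rotation of the darts around their common tail vertex).  With sigma counterclockwise, phi walks along a
  face keeping the face on its right-hand side; so bounded faces are traversed
  clockwise and the outer face counterclockwise (as seen in the plane).
  A connected map is plane (genus 0) iff V - E + F = 2 (Euler).

  Angles: the dart e stands for the angle at vertex (tail of) e between e and
  sigma e; this angle lies in the face orb phi (sigma e).  Equivalently, the
  angle of a face at the tail of a face dart f is the dart alpha (phi^-1 f);
  hence the angles of a face with darts f, phi f, phi^2 f, phi^3 f, read in
  the traversal order of phi, are the darts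
  alpha (phi^3 f), alpha f, alpha (phi f), alpha (phi^2 f).
\<close>

definition orb :: "('a \<Rightarrow> 'a) \<Rightarrow> 'a \<Rightarrow> 'a set" where
  "orb f x = {(f ^^ n) x | n. True}"

definition face_perm :: "('d \<Rightarrow> 'd) \<Rightarrow> ('d \<Rightarrow> 'd) \<Rightarrow> 'd \<Rightarrow> 'd" where
  "face_perm alpha sigma d = sigma (alpha d)"

definition map_vertices :: "'d set \<Rightarrow> ('d \<Rightarrow> 'd) \<Rightarrow> 'd set set" where
  "map_vertices D sigma = {orb sigma d | d. d \<in> D}"

definition map_edges :: "'d set \<Rightarrow> ('d \<Rightarrow> 'd) \<Rightarrow> 'd set set" where
  "map_edges D alpha = {{d, alpha d} | d. d \<in> D}"

definition map_faces :: "'d set \<Rightarrow> ('d \<Rightarrow> 'd) \<Rightarrow> ('d \<Rightarrow> 'd) \<Rightarrow> 'd set set" where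
  "map_faces D alpha sigma = {orb (face_perm alpha sigma) d | d. d \<in> D}"

definition map_connected :: "'d set \<Rightarrow> ('d \<Rightarrow> 'd) \<Rightarrow> ('d \<Rightarrow> 'd) \<Rightarrow> bool" where
  "map_connected D alpha sigma \<longleftrightarrow>
     (\<forall>d\<in>D. \<forall>d'\<in>D. (d, d') \<in> ({(x, alpha x) | x. x \<in> D} \<union> {(x, sigma x) | x. x \<in> D})\<^sup>*)"

text \<open>A quadrangulation with outer face the phi-orbit of dart z; the
  distinguished vertex s0 is the tail of z (every vertex of the outer face is
  the tail of some dart of the outer face, so this is no restriction).\<close>
definition is_quadrangulation ::
  "'d set \<Rightarrow> ('d \<Rightarrow> 'd) \<Rightarrow> ('d \<Rightarrow> 'd) \<Rightarrow> 'd \<Rightarrow> bool" where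
  "is_quadrangulation D alpha sigma z \<longleftrightarrow>
     finite D \<and> alpha permutes D \<and> sigma permutes D
   \<and> (\<forall>d\<in>D. alpha (alpha d) = d \<and> alpha d \<noteq> d)
   \<and> map_connected D alpha sigma
   \<comment> \<open>plane: Euler's formula for the connected map (genus 0)\<close>
   \<and> int (card (map_vertices D sigma)) - int (card (map_edges D alpha))
       + int (card (map_faces D alpha sigma)) = 2
   \<comment> \<open>simple: no loops, no multiple edges\<close>
   \<and> (\<forall>d\<in>D. orb sigma (alpha d) \<noteq> orb sigma d)
   \<and> (\<forall>d\<in>D. \<forall>d'\<in>D. orb sigma d = orb sigma d' \<and> orb sigma (alpha d) = orb sigma (alpha d')
          \<longrightarrow> d = d')
   \<comment> \<open>at least four vertices\<close>
   \<and> card (map_vertices D sigma) \<ge> 4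
   \<comment> \<open>every face (including the outer one) is bounded by a 4-cycle\<close>
   \<and> (\<forall>F\<in>map_faces D alpha sigma. card F = 4 \<and> card (orb sigma ` F) = 4)
   \<and> z \<in> D"

definition outer_face :: "('d \<Rightarrow> 'd) \<Rightarrow> ('d \<Rightarrow> 'd) \<Rightarrow> 'd \<Rightarrow> 'd set" where
  "outer_face alpha sigma z = orb (face_perm alpha sigma) z"

definition s0_vertex :: "('d \<Rightarrow> 'd) \<Rightarrow> 'd \<Rightarrow> 'd set" where
  "s0_vertex sigma z = orb sigma z"

definition s1_vertex :: "('d \<Rightarrow> 'd) \<Rightarrow> ('d \<Rightarrow> 'd) \<Rightarrow> 'd \<Rightarrow> 'd set" where
  "s1_vertex alpha sigma z = orb sigma ((face_perm alpha sigma ^^ 2) z)"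

text \<open>Orientations: the set O of darts pointing away from their tail, containing
  exactly one dart of each edge.  2-orientation: outdegree 2 at every vertex
  other than s0, s1.\<close>
definition two_orientations :: "'d set \<Rightarrow> ('d \<Rightarrow> 'd) \<Rightarrow> ('d \<Rightarrow> 'd) \<Rightarrow> 'd \<Rightarrow> 'd set set" where
  "two_orientations D alpha sigma z =
     {Ot. Ot \<subseteq> D \<and> (\<forall>d\<in>D. d \<in> Ot \<longleftrightarrow> alpha d \<notin> Ot)
       \<and> (\<forall>d\<in>D. orb sigma d \<noteq> s0_vertex sigma z \<and> orb sigma d \<noteq> s1_vertex alpha sigma z
              \<longrightarrow> card {e \<in> orb sigma d. e \<in> Ot} = 2)}"

definition strong_labelings :: "'d set \<Rightarrow> ('d \<Rightarrow> 'd) \<Rightarrow> ('d \<Rightarrow> 'd) \<Rightarrow> 'd \<Rightarrow> ('d \<Rightarrow> nat) set" where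
  "strong_labelings D alpha sigma z =
     (let phi = face_perm alpha sigma; S0 = s0_vertex sigma z; S1 = s1_vertex alpha sigma z in
     {l \<in> D \<rightarrow>\<^sub>E {0, 1}.
       \<comment> \<open>(G0)\<close>
       (\<forall>e\<in>D. (orb sigma e = S0 \<longrightarrow> l e = 0) \<and> (orb sigma e = S1 \<longrightarrow> l e = 1))
       \<comment> \<open>(G1): around v, in rotation order, one nonempty interval of 1s, one of 0s\<close>
     \<and> (\<forall>v\<in>D. orb sigma v \<noteq> S0 \<and> orb sigma v \<noteq> S1 \<longrightarrow>
          (\<exists>d\<in>orb sigma v. \<exists>k. 0 < k \<and> k < card (orb sigma v) \<and>
             (\<forall>j < card (orb sigma v). l ((sigma ^^ j) d) = (if j < k then 1 else 0))))
       \<comment> \<open>(G2): the two angles beside edge {d, alpha d} at the tail of d are the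
            angles inv sigma d and d; at the other endpoint inv sigma (alpha d) and alpha d\<close>
     \<and> (\<forall>d\<in>D. (l d = l (inv sigma d)) \<noteq> (l (alpha d) = l (inv sigma (alpha d))))
       \<comment> \<open>(G3) bounded faces: angles read cyclically are 0,0,1,1\<close>
     \<and> (\<forall>F\<in>map_faces D alpha sigma. F \<noteq> outer_face alpha sigma z \<longrightarrow>
          (\<exists>f\<in>F. l (alpha f) = 0 \<and> l (alpha (phi f)) = 0
                 \<and> l (alpha ((phi ^^ 2) f)) = 1 \<and> l (alpha ((phi ^^ 3) f)) = 1))
       \<comment> \<open>(G3) outer face read clockwise (= against phi) from s0:
            angles at s0, at tail of phi^3 z, at s1, at tail of phi z\<close>
     \<and> l (alpha ((phi ^^ 3) z)) = 0 \<and> l (alpha ((phi ^^ 2) z)) = 0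
     \<and> l (alpha (phi z)) = 1 \<and> l (alpha z) = 1})"

end

theory Submission
  imports Defs "HOL-Combinatorics.Orbits"
begin

lemma orb_self: "x \<in> orb p x"
  unfolding orb_def by (auto intro: exI[where x=0])

lemma orb_funpow: "(p ^^ n) x \<in> orb p x"
  unfolding orb_def by auto

lemma orb_eq_orbit:
  assumes "p permutes D" "finite D"
  shows "orb p x = orbit p x"
proof -
  have "permutation p" unfolding permutation_permutes using assms by auto
  then show ?thesis unfolding orb_def by (simp add: orbit_altdef_permutation)
qed

lemma funpow_permutes_in: "p permutes D \<Longrightarrow> x \<in> D \<Longrightarrow> (p ^^ n) x \<in> D"
proof (induct n)
  case (Suc n)
  then show ?case using permutes_in_image[OF Suc(2)] by simp
qed simp

lemma orb_subset: "p permutes D \<Longrightarrow> x \<in> D \<Longrightarrow> orb p x \<subseteq> D"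
proof
  fix y assume "p permutes D" "x \<in> D" "y \<in> orb p x"
  then show "y \<in> D" unfolding orb_def using funpow_permutes_in by auto
qed

lemma orb_finite: "p permutes D \<Longrightarrow> finite D \<Longrightarrow> finite (orb p x)"
proof -
  assume a: "p permutes D" "finite D"
  then have "permutation p" unfolding permutation_permutes by auto
  then show ?thesis using orb_eq_orbit[OF a] finite_orbit permutation_self_in_orbit by metis
qed

lemma orb_step: "p permutes D \<Longrightarrow> finite D \<Longrightarrow> orb p (p x) = orb p x"
proof -
  assume a: "p permutes D" "finite D"
  then have "permutation p" unfolding permutation_permutes by auto
  then show ?thesis using orb_eq_orbit[OF a] permutation_orbit_step by metis
qed

lemma orb_trans_eq:
  assumes "p permutes D" "finite D" "y \<in> orb p x"
  shows "orb p y = orb p x"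
proof -
  have perm: "permutation p" unfolding permutation_permutes using assms by auto
  have y: "y \<in> orbit p x" using assms orb_eq_orbit by metis
  have "orbit p y \<subseteq> orbit p x"
  proof
    fix s assume "s \<in> orbit p y" then show "s \<in> orbit p x" using orbit_trans y by metis
  qed
  moreover have "x \<in> orbit p y" using orbit_swap[OF permutation_self_in_orbit[OF perm] y] .
  then have "orbit p x \<subseteq> orbit p y"
  proof -
    assume xy: "x \<in> orbit p y"
    show ?thesis
    proof
      fix s assume "s \<in> orbit p x" then show "s \<in> orbit p y" using orbit_trans xy by metis
    qed
  qed
  ultimately show ?thesis using assms orb_eq_orbit by (metis subset_antisym)
qed

lemma orb_iff:
  assumes "p permutes D" "finite D"
  shows "y \<in> orb p x \<longleftrightarrow> orb p y = orb p x"
  using orb_trans_eq[OF assms] orb_self by metis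

lemma orb_inv: "p permutes D \<Longrightarrow> finite D \<Longrightarrow> orb p (inv p x) = orb p x"
  by (metis orb_step permutes_inverses(1))

lemma orb_enum:
  assumes "p permutes D" "finite D"
  shows "0 < card (orb p x)" "(p ^^ card (orb p x)) x = x"
    "inj_on (\<lambda>k. (p ^^ k) x) {..<card (orb p x)}"
    "orb p x = (\<lambda>k. (p ^^ k) x) ` {..<card (orb p x)}"
proof -
  have perm: "permutation p" unfolding permutation_permutes using assms by auto
  have xx: "x \<in> orbit p x" using permutation_self_in_orbit[OF perm] .
  define m where "m = funpow_dist1 p x x"
  have e: "orb p x = (\<lambda>k. (p ^^ k) x) ` {0..<m}"
    using orbit_conv_funpow_dist1[OF xx] assms orb_eq_orbit m_def by metis
  have i: "inj_on (\<lambda>k. (p ^^ k) x) {0..<m}" using inj_on_funpow_dist1[OF xx] m_def by simp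
  have c: "card (orb p x) = m" using e i by (simp add: card_image)
  show "0 < card (orb p x)" using c m_def by simp
  show "(p ^^ card (orb p x)) x = x" using c m_def funpow_dist1_prop[OF xx] by simp
  show "inj_on (\<lambda>k. (p ^^ k) x) {..<card (orb p x)}" using i c by (simp add: atLeast0LessThan)
  show "orb p x = (\<lambda>k. (p ^^ k) x) ` {..<card (orb p x)}" using e c by (simp add: atLeast0LessThan)
qed

lemma orb_funpow_mod:
  assumes "p permutes D" "finite D"
  shows "(p ^^ k) x = (p ^^ (k mod card (orb p x))) x"
  using funpow_mod_eq[OF orb_enum(2)[OF assms], of k] by simp

lemma orb_image: 
  assumes "p permutes D" "finite D"
  shows "p ` orb p x = orb p x"
proof -
  have a: "orb p (p x) = (\<lambda>n. p ((p^^n) x)) ` UNIV" unfolding orb_def by (auto simp: funpow_swap1)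
  have b: "orb p x = (\<lambda>n. (p^^n) x) ` UNIV" unfolding orb_def by auto
  have "p ` orb p x = orb p (p x)" unfolding a b image_image by simp
  then show ?thesis using orb_step[OF assms] by simp
qed

lemma orb_mem_in: "p permutes D \<Longrightarrow> finite D \<Longrightarrow> y \<in> orb p x \<Longrightarrow> p y \<in> orb p x"
  by (metis imageI orb_image)

lemma orb_inv_mem: "p permutes D \<Longrightarrow> finite D \<Longrightarrow> y \<in> orb p x \<Longrightarrow> inv p y \<in> orb p x"
  by (metis orb_inv orb_iff)

lemma orb_disjoint:
  assumes "p permutes D" "finite D" "orb p x \<noteq> orb p y"
  shows "orb p x \<inter> orb p y = {}"
  using assms orb_iff[OF assms(1,2)] by blast

definition fx :: "('x \<Rightarrow> bool) \<Rightarrow> ('x \<Rightarrow> bool) \<Rightarrow> ('x \<Rightarrow> bool)" where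
  "fx f g = (\<lambda>x. f x \<noteq> g x)"

lemma fx_apply[simp]: "fx f g x = (f x \<noteq> g x)"
  by (simp add: fx_def)

lemma fx_self[simp]: "fx f f = (\<lambda>_. False)"
  by (simp add: fx_def)

lemma fx_zero[simp]: "fx f (\<lambda>_. False) = f" "fx (\<lambda>_. False) f = f"
  by (auto simp: fx_def)

lemma fx_cancel: "fx (fx f g) g = f" "fx g (fx g f) = f" "fx (fx g f) g = f"
  by (auto simp: fx_def)

lemma card_ker_im:
  fixes G :: "('x \<Rightarrow> bool) set" and h :: "('x \<Rightarrow> bool) \<Rightarrow> ('y \<Rightarrow> bool)"
  assumes fin: "finite G" and z: "(\<lambda>_. False) \<in> G" and cl: "\<And>f g. f\<in>G \<Longrightarrow> g\<in>G \<Longrightarrow> fx f g \<in> G"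
    and hom: "\<And>f g. f\<in>G \<Longrightarrow> g\<in>G \<Longrightarrow> h (fx f g) = fx (h f) (h g)"
  shows "card G = card {g\<in>G. h g = (\<lambda>_. False)} * card (h ` G)"
proof -
  define K where "K = {g\<in>G. h g = (\<lambda>_. False)}"
  define r where "r y = (SOME g. g \<in> G \<and> h g = y)" for y
  have r: "r y \<in> G \<and> h (r y) = y" if yG: "y \<in> h ` G" for y
  proof -
    obtain x where x: "x \<in> G" "y = h x" using yG by blast
    show ?thesis unfolding r_def using someI[of "\<lambda>g. g \<in> G \<and> h g = y" x] x by blast
  qed
  define F where "F = (\<lambda>(k, y). fx k (r y))"
  have "bij_betw F (K \<times> h ` G) G"
  proof (rule bij_betwI')
    fix a b assume a: "a \<in> K \<times> h ` G" and b: "b \<in> K \<times> h ` G"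
    obtain k y where ab: "a = (k, y)" by fastforce
    obtain k' y' where bb: "b = (k', y')" by fastforce
    have k: "k \<in> G" "h k = (\<lambda>_. False)" and y: "y \<in> h ` G" using a ab K_def by auto
    have k': "k' \<in> G" "h k' = (\<lambda>_. False)" and y': "y' \<in> h ` G" using b bb K_def by auto
    show "(F a = F b) = (a = b)"
    proof
      assume e: "F a = F b"
      then have e': "fx k (r y) = fx k' (r y')" using ab bb F_def by simp
      have "h (fx k (r y)) = y" using hom[OF k(1)] r[OF y] k by simp
      moreover have "h (fx k' (r y')) = y'" using hom[OF k'(1)] r[OF y'] k' by simp
      ultimately have "y = y'" using e' by simp
      then have "k = k'" using e' by (metis fx_cancel(1))
      then show "a = b" using ab bb \<open>y = y'\<close> by simp
    qed simp
  next
    fix a assume "a \<in> K \<times> h ` G"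
    then obtain k y where a: "a = (k, y)" "k \<in> G" "y \<in> h ` G" by (auto simp: K_def)
    then show "F a \<in> G" using cl r F_def by auto
  next
    fix g assume g: "g \<in> G"
    have y: "h g \<in> h ` G" using g by simp
    define k where "k = fx g (r (h g))"
    have "k \<in> G" using cl g r[OF y] k_def by simp
    moreover have "h k = (\<lambda>_. False)" using hom[OF g] r[OF y] k_def by simp
    ultimately have "(k, h g) \<in> K \<times> h ` G" using K_def y by simp
    moreover have "g = F (k, h g)" using F_def k_def by (simp add: fx_cancel)
    ultimately show "\<exists>a\<in>K \<times> h ` G. g = F a" by blast
  qed
  then have "card G = card (K \<times> h ` G)" by (simp add: bij_betw_same_card)
  then show ?thesis by (simp add: card_cartesian_product K_def)
qed

lemma parity_xor:
  assumes "finite S"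
  shows "odd (card {x\<in>S. P x \<noteq> Q x}) = (odd (card {x\<in>S. P x}) \<noteq> odd (card {x\<in>S. Q x}))"
  using assms
proof (induct S rule: finite_induct)
  case empty
  then show ?case by simp
next
  case (insert a S)
  have e: "\<And>R. {x\<in>insert a S. R x} = (if R a then insert a {x\<in>S. R x} else {x\<in>S. R x})" by auto
  have f: "\<And>R. finite {x\<in>S. R x}" using insert by simp
  have n: "\<And>R. a \<notin> {x\<in>S. R x}" using insert by simp
  show ?case unfolding e using insert f n by (auto simp: card_insert_if)
qed

lemma even_transitions:
  fixes g :: "'a \<Rightarrow> bool"
  assumes fin: "finite S" and bij: "bij_betw p S S"
  shows "even (card {x\<in>S. g (p x) \<noteq> g x})"
proof -
  have c1: "card {x\<in>S. g (p x)} = card {x\<in>S. g x}"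
  proof -
    have "bij_betw p {x\<in>S. g (p x)} {x\<in>S. g x}"
      using bij unfolding bij_betw_def inj_on_def by auto
    then show ?thesis by (rule bij_betw_same_card)
  qed
  have "odd (card {x\<in>S. g (p x) \<noteq> g x}) = (odd (card {x\<in>S. g (p x)}) \<noteq> odd (card {x\<in>S. g x}))"
    using parity_xor[OF fin] .
  then show ?thesis using c1 by simp
qed

lemma card_bool_funs:
  assumes "finite D"
  shows "card {l :: 'd \<Rightarrow> bool. \<forall>x. l x \<longrightarrow> x \<in> D} = 2 ^ card D"
proof -
  have "bij_betw (\<lambda>l. {x. l x}) {l :: 'd \<Rightarrow> bool. \<forall>x. l x \<longrightarrow> x \<in> D} (Pow D)"
  proof (rule bij_betwI')
    fix l l' :: "'d \<Rightarrow> bool"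
    show "({x. l x} = {x. l' x}) = (l = l')" by (auto simp: fun_eq_iff)
  next
    fix l :: "'d \<Rightarrow> bool" assume "l \<in> {l. \<forall>x. l x \<longrightarrow> x \<in> D}"
    then show "{x. l x} \<in> Pow D" by auto
  next
    fix A assume "A \<in> Pow D"
    then show "\<exists>l\<in>{l. \<forall>x. l x \<longrightarrow> x \<in> D}. A = {x. l x}"
      by (intro bexI[where x="\<lambda>x. x \<in> A"]) auto
  qed
  then show ?thesis using assms by (simp add: bij_betw_same_card card_Pow)
qed

locale qmap =
  fixes D :: "'d set" and alpha sigma :: "'d \<Rightarrow> 'd" and z :: 'd
  assumes Q: "is_quadrangulation D alpha sigma z"
begin

abbreviation "phi \<equiv> face_perm alpha sigma"
abbreviation "VS \<equiv> map_vertices D sigma"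
abbreviation "ES \<equiv> map_edges D alpha"
abbreviation "FS \<equiv> map_faces D alpha sigma"

lemma finD: "finite D" using Q unfolding is_quadrangulation_def by simp
lemma aperm: "alpha permutes D" using Q unfolding is_quadrangulation_def by simp
lemma sperm: "sigma permutes D" using Q unfolding is_quadrangulation_def by simp
lemma zD: "z \<in> D" using Q unfolding is_quadrangulation_def by simp
lemma aa_D: "d \<in> D \<Longrightarrow> alpha (alpha d) = d" using Q unfolding is_quadrangulation_def by simp
lemma a_neq: "d \<in> D \<Longrightarrow> alpha d \<noteq> d" using Q unfolding is_quadrangulation_def by simp
lemma conn: "map_connected D alpha sigma" using Q unfolding is_quadrangulation_def by simp
lemma euler: "int (card VS) - int (card ES) + int (card FS) = 2"
  using Q unfolding is_quadrangulation_def by simp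
lemma faces4: "P \<in> FS \<Longrightarrow> card P = 4 \<and> card (orb sigma ` P) = 4"
  using Q unfolding is_quadrangulation_def by simp
lemma V4: "card VS \<ge> 4" using Q unfolding is_quadrangulation_def by simp

lemma aa[simp]: "alpha (alpha d) = d"
proof (cases "d \<in> D")
  case True then show ?thesis by (rule aa_D)
next
  case False then show ?thesis using permutes_not_in[OF aperm] by simp
qed

lemma phi_apply: "phi d = sigma (alpha d)" by (simp add: face_perm_def)
lemma phi_eq: "phi = sigma \<circ> alpha" by (auto simp: face_perm_def)
lemma pperm: "phi permutes D" unfolding phi_eq by (rule permutes_compose[OF aperm sperm])

lemma a_in[simp]: "alpha d \<in> D \<longleftrightarrow> d \<in> D" using permutes_in_image[OF aperm] .
lemma s_in[simp]: "sigma d \<in> D \<longleftrightarrow> d \<in> D" using permutes_in_image[OF sperm] .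
lemma p_in[simp]: "phi d \<in> D \<longleftrightarrow> d \<in> D" using permutes_in_image[OF pperm] .
lemma si_in[simp]: "inv sigma d \<in> D \<longleftrightarrow> d \<in> D" using permutes_in_image[OF permutes_inv[OF sperm]] .
lemma s_si[simp]: "sigma (inv sigma d) = d" using permutes_inverses(1)[OF sperm] .
lemma si_s[simp]: "inv sigma (sigma d) = d" using permutes_inverses(2)[OF sperm] .
lemma s_eq_phi_a: "sigma d = phi (alpha d)" by (simp add: phi_apply)
lemma a_inv: "alpha d = d' \<longleftrightarrow> d = alpha d'" by auto

lemma conn_induct:
  assumes "P z" "\<And>d. d \<in> D \<Longrightarrow> P d \<Longrightarrow> P (alpha d)" "\<And>d. d \<in> D \<Longrightarrow> P d \<Longrightarrow> P (sigma d)"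
    and "d \<in> D"
  shows "P d"
proof -
  let ?R = "{(x, alpha x) | x. x \<in> D} \<union> {(x, sigma x) | x. x \<in> D}"
  have "(z, d) \<in> ?R\<^sup>*" using conn zD assms(4) unfolding map_connected_def by blast
  then show ?thesis
  proof (induct rule: rtrancl_induct)
    case base then show ?case using assms(1) .
  next
    case (step y w)
    then show ?case using assms(2,3) by blast
  qed
qed

lemma conn_const:
  assumes "\<And>d. d \<in> D \<Longrightarrow> m (alpha d) = m d" "\<And>d. d \<in> D \<Longrightarrow> m (sigma d) = m d" "d \<in> D"
  shows "m d = m z"
  using conn_induct[where P="\<lambda>d. m d = m z", OF refl] assms by metis

lemma VS_cases: "v \<in> VS \<Longrightarrow> \<exists>d\<in>D. v = orb sigma d" unfolding map_vertices_def by blast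
lemma FS_cases: "P \<in> FS \<Longrightarrow> \<exists>d\<in>D. P = orb phi d" unfolding map_faces_def by blast
lemma VS_I: "d \<in> D \<Longrightarrow> orb sigma d \<in> VS" unfolding map_vertices_def by blast
lemma FS_I: "d \<in> D \<Longrightarrow> orb phi d \<in> FS" unfolding map_faces_def by blast

lemma sorb_iff: "y \<in> orb sigma x \<longleftrightarrow> orb sigma y = orb sigma x" using orb_iff[OF sperm finD] .
lemma porb_iff: "y \<in> orb phi x \<longleftrightarrow> orb phi y = orb phi x" using orb_iff[OF pperm finD] .
lemma sorb_sub: "x \<in> D \<Longrightarrow> orb sigma x \<subseteq> D" using orb_subset[OF sperm] .
lemma porb_sub: "x \<in> D \<Longrightarrow> orb phi x \<subseteq> D" using orb_subset[OF pperm] .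
lemma sorb_fin: "finite (orb sigma x)" using orb_finite[OF sperm finD] .
lemma porb_fin: "finite (orb phi x)" using orb_finite[OF pperm finD] .
lemma sorb_step[simp]: "orb sigma (sigma x) = orb sigma x" using orb_step[OF sperm finD] .
lemma sorb_inv[simp]: "orb sigma (inv sigma x) = orb sigma x" using orb_inv[OF sperm finD] .
lemma porb_step[simp]: "orb phi (phi x) = orb phi x" using orb_step[OF pperm finD] .

lemma VS_mem: "v \<in> VS \<Longrightarrow> d \<in> v \<longleftrightarrow> v = orb sigma d"
  using VS_cases sorb_iff by metis
lemma FS_mem: "P \<in> FS \<Longrightarrow> d \<in> P \<longleftrightarrow> P = orb phi d"
  using FS_cases porb_iff by metis

lemma VS_sub: "v \<in> VS \<Longrightarrow> v \<subseteq> D" using VS_cases sorb_sub by metis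
lemma FS_sub: "P \<in> FS \<Longrightarrow> P \<subseteq> D" using FS_cases porb_sub by metis
lemma VS_fin: "finite VS" unfolding map_vertices_def using finD by simp
lemma FS_fin: "finite FS" unfolding map_faces_def using finD by simp
lemma ES_fin: "finite ES" unfolding map_edges_def using finD by simp

lemma card_D_ES: "card D = 2 * card ES"
proof -
  have u: "\<Union>ES = D" unfolding map_edges_def by auto
  have "2 * card ES = card (\<Union>ES)"
  proof (rule card_partition)
    show "finite ES" by (rule ES_fin)
    show "finite (\<Union>ES)" using u finD by simp
    show "\<And>c. c\<in>ES \<Longrightarrow> card c = 2" unfolding map_edges_def using a_neq by (auto simp: card_2_iff)
    have e: "{d, alpha d} = {x, alpha x}" if "x \<in> {d, alpha d}" for d x
      using that by auto
    show "\<And>c1 c2. c1\<in>ES \<Longrightarrow> c2\<in>ES \<Longrightarrow> c1 \<noteq> c2 \<Longrightarrow> c1 \<inter> c2 = {}"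
    proof -
      fix c1 c2 assume "c1 \<in> ES" "c2 \<in> ES" "c1 \<noteq> c2"
      then obtain d1 d2 where c: "c1 = {d1, alpha d1}" "c2 = {d2, alpha d2}"
        unfolding map_edges_def by blast
      show "c1 \<inter> c2 = {}"
      proof (rule ccontr)
        assume "c1 \<inter> c2 \<noteq> {}"
        then obtain x where "x \<in> c1" "x \<in> c2" by blast
        then have "c1 = {x, alpha x}" "c2 = {x, alpha x}" using e c by metis+
        then show False using \<open>c1 \<noteq> c2\<close> by simp
      qed
    qed
  qed
  then show ?thesis using u by simp
qed

lemma card_D_FS: "card D = 4 * card FS"
proof -
  have u: "\<Union>FS = D"
  proof
    show "\<Union>FS \<subseteq> D" using FS_sub by blast
    show "D \<subseteq> \<Union>FS"
    proof
      fix d assume "d \<in> D"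
      then have "orb phi d \<in> FS" "d \<in> orb phi d" using FS_I orb_self by auto
      then show "d \<in> \<Union>FS" by blast
    qed
  qed
  have "4 * card FS = card (\<Union>FS)"
  proof (rule card_partition)
    show "finite FS" by (rule FS_fin)
    show "finite (\<Union>FS)" using u finD by simp
    show "\<And>c. c\<in>FS \<Longrightarrow> card c = 4" using faces4 by blast
    show "\<And>c1 c2. c1\<in>FS \<Longrightarrow> c2\<in>FS \<Longrightarrow> c1 \<noteq> c2 \<Longrightarrow> c1 \<inter> c2 = {}"
    proof -
      fix c1 c2 assume c: "c1 \<in> FS" "c2 \<in> FS" "c1 \<noteq> c2"
      show "c1 \<inter> c2 = {}"
      proof (rule ccontr)
        assume "c1 \<inter> c2 \<noteq> {}"
        then obtain x where "x \<in> c1" "x \<in> c2" by blast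
        then show False using FS_mem[OF c(1)] FS_mem[OF c(2)] c(3) by simp
      qed
    qed
  qed
  then show ?thesis using u by simp
qed

lemma counts: "card ES = 2 * card FS" "card VS = card FS + 2" "card D = 4 * card FS"
  using card_D_ES card_D_FS euler by linarith+

lemma Dne: "D \<noteq> {}" using zD by blast
lemma FS_pos: "card FS \<ge> 1" using counts V4 by linarith

lemma porb4: "d \<in> D \<Longrightarrow> card (orb phi d) = 4" using faces4 FS_I by blast

lemma phi4: "d \<in> D \<Longrightarrow> (phi ^^ 4) d = d"
  using orb_enum(2)[OF pperm finD, of d] porb4 by simp

lemma phi_plus4: "d \<in> D \<Longrightarrow> (phi ^^ (n + 4)) d = (phi ^^ n) d"
  by (simp add: funpow_add phi4)

lemma porb_enum: "d \<in> D \<Longrightarrow> orb phi d = {d, phi d, (phi ^^ 2) d, (phi ^^ 3) d}"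
proof -
  assume d: "d \<in> D"
  have "orb phi d = (\<lambda>k. (phi ^^ k) d) ` {..<4}" using orb_enum(4)[OF pperm finD, of d] porb4[OF d] by simp
  also have "{..<4::nat} = {0,1,2,3}" by auto
  finally show ?thesis by (simp add: numeral_eq_Suc)
qed

lemma porb_distinct: "d \<in> D \<Longrightarrow> j < 4 \<Longrightarrow> k < 4 \<Longrightarrow> (phi ^^ j) d = (phi ^^ k) d \<Longrightarrow> j = k"
  using orb_enum(3)[OF pperm finD, of d] porb4 unfolding inj_on_def by auto

end

context qmap
begin

definition XS :: "('d \<Rightarrow> bool) set" where "XS = {l. \<forall>x. l x \<longrightarrow> x \<in> D}"

definition Phi :: "('d \<Rightarrow> bool) \<Rightarrow> ('d + 'd \<Rightarrow> bool)" where
  "Phi l = (\<lambda>x. case x of Inl d \<Rightarrow> d \<in> D \<and> (l (sigma d) \<noteq> l d)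
                         | Inr d \<Rightarrow> d \<in> D \<and> (l (alpha d) \<noteq> l d))"

definition WS :: "('d + 'd \<Rightarrow> bool) set" where
  "WS = {w. (\<forall>x. w x \<longrightarrow> x \<in> Inl ` D \<union> Inr ` D) \<and> (\<forall>d\<in>D. w (Inr (alpha d)) = w (Inr d))}"

definition Cm :: "('d + 'd \<Rightarrow> bool) \<Rightarrow> ('d set + 'd set \<Rightarrow> bool)" where
  "Cm w = (\<lambda>y. case y of Inl v \<Rightarrow> v \<in> VS \<and> odd (card {d\<in>v. w (Inl d)})
                        | Inr P \<Rightarrow> P \<in> FS \<and> odd (card {d\<in>P. w (Inr d) \<noteq> w (Inl (alpha d))}))"

definition YS where "YS = {w\<in>WS. Cm w = (\<lambda>_. False)}"

lemma XS_card: "card XS = 2 ^ card D"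
  unfolding XS_def using card_bool_funs[OF finD] .

lemma XS_fin: "finite XS"
  using XS_card card_ge_0_finite[of XS] by (metis card.infinite power_not_zero zero_neq_numeral)

lemma XS_zero: "(\<lambda>_. False) \<in> XS" unfolding XS_def by simp
lemma XS_fx: "l \<in> XS \<Longrightarrow> l' \<in> XS \<Longrightarrow> fx l l' \<in> XS" unfolding XS_def by auto

lemma Phi_fx: "Phi (fx l l') = fx (Phi l) (Phi l')"
  unfolding Phi_def by (rule ext) (auto split: sum.split)

lemma Phi_ker: "{l\<in>XS. Phi l = (\<lambda>_. False)} = {(\<lambda>_. False), (\<lambda>x. x \<in> D)}"
proof (intro set_eqI iffI)
  fix l assume "l \<in> {l\<in>XS. Phi l = (\<lambda>_. False)}"
  then have l: "l \<in> XS" "Phi l = (\<lambda>_. False)" by auto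
  have s: "l (sigma d) = l d" if "d \<in> D" for d
    using fun_cong[OF l(2), of "Inl d"] that unfolding Phi_def by auto
  have a: "l (alpha d) = l d" if "d \<in> D" for d
    using fun_cong[OF l(2), of "Inr d"] that unfolding Phi_def by auto
  have c: "l d = l z" if "d \<in> D" for d using conn_const[of l, OF a s that] .
  show "l \<in> {(\<lambda>_. False), (\<lambda>x. x \<in> D)}"
  proof (cases "l z")
    case True
    then have "l = (\<lambda>x. x \<in> D)" using c l(1) unfolding XS_def by auto
    then show ?thesis by simp
  next
    case False
    then have "l = (\<lambda>_. False)" using c l(1) unfolding XS_def by auto
    then show ?thesis by simp
  qed
next
  fix l assume "l \<in> {(\<lambda>_. False), (\<lambda>x. x \<in> D)}"
  then have "l = (\<lambda>_. False) \<or> l = (\<lambda>x. x \<in> D)" by simp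
  moreover have "Phi (\<lambda>_. False) = (\<lambda>_. False)"
  proof (rule ext)
    fix x show "Phi (\<lambda>_. False) x = False" unfolding Phi_def by (cases x) simp_all
  qed
  moreover have "Phi (\<lambda>x. x \<in> D) = (\<lambda>_. False)"
  proof (rule ext)
    fix x show "Phi (\<lambda>x. x \<in> D) x = False" unfolding Phi_def by (cases x) simp_all
  qed
  moreover have "(\<lambda>x. x \<in> D) \<in> XS" unfolding XS_def by simp
  ultimately show "l \<in> {l\<in>XS. Phi l = (\<lambda>_. False)}" using XS_zero by auto
qed

lemma Phi_img_card: "card XS = 2 * card (Phi ` XS)"
proof -
  have "card XS = card {l\<in>XS. Phi l = (\<lambda>_. False)} * card (Phi ` XS)"
    by (rule card_ker_im[OF XS_fin XS_zero XS_fx Phi_fx])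
  moreover have "card {l\<in>XS. Phi l = (\<lambda>_. False)} = 2"
  proof -
    have "(\<lambda>_. False) \<noteq> (\<lambda>x. x \<in> D)" using zD by (auto simp: fun_eq_iff)
    then show ?thesis unfolding Phi_ker by simp
  qed
  ultimately show ?thesis by simp
qed

lemma WS_bij: "bij_betw (\<lambda>w. ({d. w (Inl d)}, {e\<in>ES. \<exists>d\<in>e. w (Inr d)})) WS (Pow D \<times> Pow ES)"
proof (rule bij_betwI[where g="\<lambda>(A, B). (\<lambda>x. case x of Inl d \<Rightarrow> d \<in> A | Inr d \<Rightarrow> d \<in> D \<and> {d, alpha d} \<in> B)"])
  show "(\<lambda>w. ({d. w (Inl d)}, {e\<in>ES. \<exists>d\<in>e. w (Inr d)})) \<in> WS \<rightarrow> Pow D \<times> Pow ES"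
    unfolding WS_def by auto
  show "(\<lambda>(A, B). (\<lambda>x. case x of Inl d \<Rightarrow> d \<in> A | Inr d \<Rightarrow> d \<in> D \<and> {d, alpha d} \<in> B)) \<in> Pow D \<times> Pow ES \<rightarrow> WS"
  proof
    fix y assume "y \<in> Pow D \<times> Pow ES"
    then obtain A B where y: "y = (A, B)" "A \<subseteq> D" "B \<subseteq> ES" by auto
    have "\<forall>x. (case x of Inl d \<Rightarrow> d \<in> A | Inr d \<Rightarrow> d \<in> D \<and> {d, alpha d} \<in> B) \<longrightarrow> x \<in> Inl ` D \<union> Inr ` D"
    proof (intro allI impI)
      fix x assume "case x of Inl d \<Rightarrow> d \<in> A | Inr d \<Rightarrow> d \<in> D \<and> {d, alpha d} \<in> B"
      then show "x \<in> Inl ` D \<union> Inr ` D" using y by (cases x) auto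
    qed
    then show "(\<lambda>(A, B). (\<lambda>x. case x of Inl d \<Rightarrow> d \<in> A | Inr d \<Rightarrow> d \<in> D \<and> {d, alpha d} \<in> B)) y \<in> WS"
      unfolding WS_def using y by (simp add: insert_commute)
  qed
next
  fix w assume w: "w \<in> WS"
  show "(\<lambda>(A, B). (\<lambda>x. case x of Inl d \<Rightarrow> d \<in> A | Inr d \<Rightarrow> d \<in> D \<and> {d, alpha d} \<in> B))
          ({d. w (Inl d)}, {e\<in>ES. \<exists>d\<in>e. w (Inr d)}) = w"
  proof (rule ext)
    fix x show "(\<lambda>(A, B). (\<lambda>x. case x of Inl d \<Rightarrow> d \<in> A | Inr d \<Rightarrow> d \<in> D \<and> {d, alpha d} \<in> B))
          ({d. w (Inl d)}, {e\<in>ES. \<exists>d\<in>e. w (Inr d)}) x = w x"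
    proof (cases x)
      case (Inl d) then show ?thesis by simp
    next
      case (Inr d)
      have "(d \<in> D \<and> {d, alpha d} \<in> ES \<and> (\<exists>d'\<in>{d, alpha d}. w (Inr d'))) = w (Inr d)"
      proof
        assume "d \<in> D \<and> {d, alpha d} \<in> ES \<and> (\<exists>d'\<in>{d, alpha d}. w (Inr d'))"
        then show "w (Inr d)" using w unfolding WS_def by auto
      next
        assume "w (Inr d)"
        moreover then have "d \<in> D" using w unfolding WS_def by auto
        ultimately show "d \<in> D \<and> {d, alpha d} \<in> ES \<and> (\<exists>d'\<in>{d, alpha d}. w (Inr d'))"
          unfolding map_edges_def by auto
      qed
      then show ?thesis using Inr by simp
    qed
  qed
next
  fix y assume y: "y \<in> Pow D \<times> Pow ES"
  obtain A B where AB: "y = (A, B)" by fastforce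
  have A: "A \<subseteq> D" and B: "B \<subseteq> ES" using y AB by auto
  have "{e\<in>ES. \<exists>d\<in>e. d \<in> D \<and> {d, alpha d} \<in> B} = B"
  proof (intro set_eqI iffI)
    fix e assume "e \<in> {e\<in>ES. \<exists>d\<in>e. d \<in> D \<and> {d, alpha d} \<in> B}"
    then obtain d0 d where "d0 \<in> D" "e = {d0, alpha d0}" "d \<in> e" "{d, alpha d} \<in> B"
      unfolding map_edges_def by blast
    moreover then have "{d, alpha d} = e" by auto
    ultimately show "e \<in> B" by simp
  next
    fix e assume "e \<in> B"
    moreover then obtain d0 where "d0 \<in> D" "e = {d0, alpha d0}" using B unfolding map_edges_def by blast
    ultimately show "e \<in> {e\<in>ES. \<exists>d\<in>e. d \<in> D \<and> {d, alpha d} \<in> B}" using B by auto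
  qed
  then show "(\<lambda>w. ({d. w (Inl d)}, {e\<in>ES. \<exists>d\<in>e. w (Inr d)}))
      ((\<lambda>(A, B). (\<lambda>x. case x of Inl d \<Rightarrow> d \<in> A | Inr d \<Rightarrow> d \<in> D \<and> {d, alpha d} \<in> B)) y) = y"
    using AB by simp
qed

lemma WS_card: "card WS = 2 ^ card D * 2 ^ card ES"
  using bij_betw_same_card[OF WS_bij] finD ES_fin by (simp add: card_cartesian_product card_Pow)

lemma WS_fin: "finite WS"
  using bij_betw_finite[OF WS_bij] finD ES_fin by simp

lemma WS_zero: "(\<lambda>_. False) \<in> WS" unfolding WS_def by simp
lemma WS_fx: "w \<in> WS \<Longrightarrow> w' \<in> WS \<Longrightarrow> fx w w' \<in> WS" unfolding WS_def by auto

lemma Cm_fx: "Cm (fx w w') = fx (Cm w) (Cm w')"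
proof (rule ext)
  fix y show "Cm (fx w w') y = fx (Cm w) (Cm w') y"
  proof (cases y)
    case (Inl v)
    show ?thesis
    proof (cases "v \<in> VS")
      case True
      then have "finite v" using VS_sub finD finite_subset by metis
      then show ?thesis using Inl True parity_xor[of v "\<lambda>d. w (Inl d)" "\<lambda>d. w' (Inl d)"]
        unfolding Cm_def by simp
    next
      case False then show ?thesis using Inl unfolding Cm_def by simp
    qed
  next
    case (Inr P)
    show ?thesis
    proof (cases "P \<in> FS")
      case True
      then have "finite P" using FS_sub finD finite_subset by metis
      moreover have "{d\<in>P. (w (Inr d) \<noteq> w' (Inr d)) \<noteq> (w (Inl (alpha d)) \<noteq> w' (Inl (alpha d)))}
          = {d\<in>P. (w (Inr d) \<noteq> w (Inl (alpha d))) \<noteq> (w' (Inr d) \<noteq> w' (Inl (alpha d)))}" by auto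
      ultimately show ?thesis using Inr True
          parity_xor[of P "\<lambda>d. w (Inr d) \<noteq> w (Inl (alpha d))" "\<lambda>d. w' (Inr d) \<noteq> w' (Inl (alpha d))"]
        unfolding Cm_def by simp
    next
      case False then show ?thesis using Inr unfolding Cm_def by simp
    qed
  qed
qed

lemma Cm_zero: "Cm (\<lambda>_. False) = (\<lambda>_. False)"
  unfolding Cm_def by (rule ext) (simp split: sum.split)

lemma WS_ker_im: "card WS = card YS * card (Cm ` WS)"
  unfolding YS_def by (rule card_ker_im[OF WS_fin WS_zero WS_fx Cm_fx])

end

context qmap
begin

definition agr :: "('d set + 'd set \<Rightarrow> bool) \<Rightarrow> ('d set + 'd set \<Rightarrow> bool) \<Rightarrow> bool" where
  "agr u u' \<longleftrightarrow> (\<forall>y. y \<noteq> Inr (orb phi z) \<longrightarrow> u y = u' y)"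

definition GEN where "GEN = {u. \<exists>w\<in>WS. agr (Cm w) u}"

lemma GEN_fx: "u \<in> GEN \<Longrightarrow> u' \<in> GEN \<Longrightarrow> fx u u' \<in> GEN"
proof -
  assume "u \<in> GEN" "u' \<in> GEN"
  then obtain w w' where "w \<in> WS" "w' \<in> WS" "agr (Cm w) u" "agr (Cm w') u'" unfolding GEN_def by blast
  then have "fx w w' \<in> WS" "agr (Cm (fx w w')) (fx u u')" using WS_fx unfolding agr_def Cm_fx by auto
  then show ?thesis unfolding GEN_def by blast
qed

lemma GEN_Cm: "w \<in> WS \<Longrightarrow> Cm w \<in> GEN" unfolding GEN_def agr_def by blast

lemma GEN_zero: "(\<lambda>_. False) \<in> GEN" using GEN_Cm[OF WS_zero] Cm_zero by simp

lemma GEN_F0: "(\<lambda>y. y = Inr (orb phi z)) \<in> GEN"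
  using GEN_Cm[OF WS_zero] unfolding GEN_def agr_def Cm_zero by auto

lemma gen1:
  assumes d: "d \<in> D"
  shows "(\<lambda>x. x = Inl d) \<in> WS"
    "Cm (\<lambda>x. x = Inl d) = fx (\<lambda>y. y = Inl (orb sigma d)) (\<lambda>y. y = Inr (orb phi (alpha d)))"
proof -
  show "(\<lambda>x. x = Inl d) \<in> WS" unfolding WS_def using d by auto
  show "Cm (\<lambda>x. x = Inl d) = fx (\<lambda>y. y = Inl (orb sigma d)) (\<lambda>y. y = Inr (orb phi (alpha d)))"
  proof (rule ext)
    fix y show "Cm (\<lambda>x. x = Inl d) y = fx (\<lambda>y. y = Inl (orb sigma d)) (\<lambda>y. y = Inr (orb phi (alpha d))) y"
    proof (cases y)
      case (Inl v)
      have "{d'\<in>v. d' = d} = (if d \<in> v then {d} else {})" by auto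
      then have "(v \<in> VS \<and> odd (card {d'\<in>v. d' = d})) = (v = orb sigma d)"
        using VS_mem VS_I[OF d] by auto
      then show ?thesis using Inl unfolding Cm_def by simp
    next
      case (Inr P)
      have ai: "\<And>d'. (alpha d' = d) = (d' = alpha d)" by auto
      have "{d'\<in>P. False \<noteq> (alpha d' = d)} = (if alpha d \<in> P then {alpha d} else {})" using ai by auto
      then have "(P \<in> FS \<and> odd (card {d'\<in>P. False \<noteq> (alpha d' = d)})) = (P = orb phi (alpha d))"
        using FS_mem FS_I d by auto
      then show ?thesis using Inr unfolding Cm_def by simp
    qed
  qed
qed

lemma gen2:
  assumes d: "d \<in> D"
  shows "(\<lambda>x. x = Inr d \<or> x = Inr (alpha d)) \<in> WS"
    "Cm (\<lambda>x. x = Inr d \<or> x = Inr (alpha d)) = fx (\<lambda>y. y = Inr (orb phi d)) (\<lambda>y. y = Inr (orb phi (alpha d)))"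
proof -
  have ai: "\<And>d'. (alpha d' = alpha d) = (d' = d)" by (metis aa)
  have ai2: "\<And>d'. (alpha d' = d) = (d' = alpha d)" by auto
  have "\<forall>x. (x = Inr d \<or> x = Inr (alpha d)) \<longrightarrow> x \<in> Inl ` D \<union> Inr ` D" using d by auto
  moreover have "\<forall>d'\<in>D. (Inr (alpha d') = Inr d \<or> Inr (alpha d') = Inr (alpha d)) = (Inr d' = Inr d \<or> Inr d' = Inr (alpha d))"
    by (simp only: sum.inject ai ai2) blast
  ultimately show "(\<lambda>x. x = Inr d \<or> x = Inr (alpha d)) \<in> WS" unfolding WS_def by blast
  show "Cm (\<lambda>x. x = Inr d \<or> x = Inr (alpha d)) = fx (\<lambda>y. y = Inr (orb phi d)) (\<lambda>y. y = Inr (orb phi (alpha d)))"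
  proof (rule ext)
    fix y show "Cm (\<lambda>x. x = Inr d \<or> x = Inr (alpha d)) y = fx (\<lambda>y. y = Inr (orb phi d)) (\<lambda>y. y = Inr (orb phi (alpha d))) y"
    proof (cases y)
      case (Inl v)
      then show ?thesis unfolding Cm_def by simp
    next
      case (Inr P)
      have e: "{d'\<in>P. (d' = d \<or> d' = alpha d) \<noteq> False} = P \<inter> {d, alpha d}" by auto
      have ne: "d \<noteq> alpha d" using a_neq[OF d] by metis
      have "(P \<in> FS \<and> odd (card (P \<inter> {d, alpha d}))) = ((P = orb phi d) \<noteq> (P = orb phi (alpha d)))"
      proof (cases "P \<in> FS")
        case True
        have m: "d \<in> P \<longleftrightarrow> P = orb phi d" "alpha d \<in> P \<longleftrightarrow> P = orb phi (alpha d)"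
          using FS_mem[OF True] by auto
        show ?thesis
        proof (cases "d \<in> P"; cases "alpha d \<in> P")
          assume "d \<in> P" "alpha d \<in> P"
          then have "P \<inter> {d, alpha d} = {d, alpha d}" by auto
          then show ?thesis using ne m \<open>d \<in> P\<close> \<open>alpha d \<in> P\<close> True by simp
        next
          assume "d \<in> P" "alpha d \<notin> P"
          then have "P \<inter> {d, alpha d} = {d}" by auto
          then show ?thesis using m \<open>d \<in> P\<close> \<open>alpha d \<notin> P\<close> True by simp
        next
          assume "d \<notin> P" "alpha d \<in> P"
          then have "P \<inter> {d, alpha d} = {alpha d}" by auto
          then show ?thesis using m \<open>d \<notin> P\<close> \<open>alpha d \<in> P\<close> True by simp
        next
          assume "d \<notin> P" "alpha d \<notin> P"
          then have "P \<inter> {d, alpha d} = {}" by auto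
          then show ?thesis using m \<open>d \<notin> P\<close> \<open>alpha d \<notin> P\<close> True by simp
        qed
      next
        case False
        then show ?thesis using FS_I d by auto
      qed
      then show ?thesis using Inr e unfolding Cm_def by simp
    qed
  qed
qed

lemma GEN_face: "d \<in> D \<Longrightarrow> (\<lambda>y. y = Inr (orb phi d)) \<in> GEN"
proof -
  assume dD: "d \<in> D"
  have st2: "(\<lambda>y. y = Inr (orb phi (alpha d))) \<in> GEN"
    if d: "d \<in> D" and h: "(\<lambda>y. y = Inr (orb phi d)) \<in> GEN" for d
  proof -
    have "fx (\<lambda>y. y = Inr (orb phi d)) (Cm (\<lambda>x. x = Inr d \<or> x = Inr (alpha d))) \<in> GEN"
      using GEN_fx[OF h GEN_Cm[OF gen2(1)[OF d]]] .
    then show ?thesis unfolding gen2(2)[OF d] fx_cancel .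
  qed
  have st3: "(\<lambda>y. y = Inr (orb phi (sigma d))) \<in> GEN"
    if d: "d \<in> D" and h: "(\<lambda>y. y = Inr (orb phi d)) \<in> GEN" for d
  proof -
    have "orb phi (sigma d) = orb phi (alpha d)" by (simp add: s_eq_phi_a)
    then show ?thesis using st2[OF d h] by simp
  qed
  show ?thesis using conn_induct[where P="\<lambda>d. (\<lambda>y. y = Inr (orb phi d)) \<in> GEN", OF GEN_F0 st2 st3 dD] .
qed

lemma GEN_vertex: "d \<in> D \<Longrightarrow> (\<lambda>y. y = Inl (orb sigma d)) \<in> GEN"
proof -
  assume d: "d \<in> D"
  have "fx (Cm (\<lambda>x. x = Inl d)) (\<lambda>y. y = Inr (orb phi (alpha d))) \<in> GEN"
    using GEN_fx[OF GEN_Cm[OF gen1(1)[OF d]] GEN_face] d by simp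
  then show ?thesis unfolding gen1(2)[OF d] fx_cancel .
qed

lemma GEN_set:
  assumes "finite A" "A \<subseteq> Inl ` VS \<union> Inr ` FS"
  shows "(\<lambda>y. y \<in> A) \<in> GEN"
  using assms
proof (induct A rule: finite_induct)
  case empty then show ?case using GEN_zero by simp
next
  case (insert a A)
  have ea: "(\<lambda>y. y = a) \<in> GEN"
  proof -
    have "a \<in> Inl ` VS \<union> Inr ` FS" using insert by simp
    then show ?thesis
    proof
      assume "a \<in> Inl ` VS"
      then obtain d where "d \<in> D" "a = Inl (orb sigma d)" using VS_cases by blast
      then show ?thesis using GEN_vertex by simp
    next
      assume "a \<in> Inr ` FS"
      then obtain d where "d \<in> D" "a = Inr (orb phi d)" using FS_cases by blast
      then show ?thesis using GEN_face by simp
    qed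
  qed
  have "(\<lambda>y. y \<in> insert a A) = fx (\<lambda>y. y \<in> A) (\<lambda>y. y = a)" using insert(2) by (auto simp: fun_eq_iff)
  then show ?case using GEN_fx[OF _ ea] insert by simp
qed

lemma F0_FS: "orb phi z \<in> FS" using FS_I zD .

lemma Cm_img_card: "2 ^ card VS * 2 ^ (card FS - 1) \<le> card (Cm ` WS)"
proof -
  define F0 where "F0 = orb phi z"
  define T where "T = Pow VS \<times> Pow (FS - {F0})"
  define tg :: "'d set set \<times> 'd set set \<Rightarrow> ('d set + 'd set \<Rightarrow> bool)" where "tg = (\<lambda>(A, B). (\<lambda>y. y \<in> Inl ` A \<union> Inr ` B))"
  define wt where "wt = (\<lambda>AB. SOME w. w \<in> WS \<and> agr (Cm w) (tg AB))"
  have wt: "wt AB \<in> WS \<and> agr (Cm (wt AB)) (tg AB)" if ABT: "AB \<in> T" for AB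
  proof -
    obtain A B where AB: "AB = (A, B)" "A \<subseteq> VS" "B \<subseteq> FS - {F0}" using ABT T_def by auto
    have "finite (Inl ` A \<union> Inr ` B)" using AB VS_fin FS_fin finite_subset by blast
    moreover have "Inl ` A \<union> Inr ` B \<subseteq> Inl ` VS \<union> Inr ` FS" using AB by blast
    ultimately have "(\<lambda>y. y \<in> Inl ` A \<union> Inr ` B) \<in> GEN" by (rule GEN_set)
    then have "tg AB \<in> GEN" using AB tg_def by simp
    then have "\<exists>w. w \<in> WS \<and> agr (Cm w) (tg AB)" unfolding GEN_def by blast
    then show ?thesis unfolding wt_def by (rule someI_ex)
  qed
  have inj: "inj_on (\<lambda>AB. Cm (wt AB)) T"
  proof (rule inj_onI)
    fix AB AB' assume a: "AB \<in> T" "AB' \<in> T" "Cm (wt AB) = Cm (wt AB')"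
    obtain A B where AB: "AB = (A, B)" "A \<subseteq> VS" "B \<subseteq> FS - {F0}" using a T_def by auto
    obtain A' B' where AB': "AB' = (A', B')" "A' \<subseteq> VS" "B' \<subseteq> FS - {F0}" using a T_def by auto
    have g: "agr (Cm (wt AB)) (tg AB)" "agr (Cm (wt AB')) (tg AB')"
      by (rule conjunct2[OF wt[OF a(1)]], rule conjunct2[OF wt[OF a(2)]])
    have "A = A'"
    proof (intro set_eqI)
      fix v
      have "tg AB (Inl v) = tg AB' (Inl v)" using g a(3) unfolding agr_def by (metis sum.distinct(1))
      then show "v \<in> A \<longleftrightarrow> v \<in> A'" using AB AB' tg_def by auto
    qed
    moreover have "B = B'"
    proof (intro set_eqI)
      fix P
      show "P \<in> B \<longleftrightarrow> P \<in> B'"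
      proof (cases "P = F0")
        case True then show ?thesis using AB AB' by auto
      next
        case False
        then have "tg AB (Inr P) = tg AB' (Inr P)" using g a(3) unfolding agr_def F0_def by (metis sum.inject(2))
        then show ?thesis using AB AB' tg_def by auto
      qed
    qed
    ultimately show "AB = AB'" using AB AB' by simp
  qed
  have sub: "(\<lambda>AB. Cm (wt AB)) ` T \<subseteq> Cm ` WS" using wt by blast
  have "card T \<le> card (Cm ` WS)"
    using card_inj_on_le[OF inj sub] WS_fin by simp
  moreover have "card T = 2 ^ card VS * 2 ^ (card FS - 1)"
    unfolding T_def using VS_fin FS_fin F0_FS F0_def
    by (simp add: card_cartesian_product card_Pow card_Diff_singleton)
  ultimately show ?thesis by simp
qed

lemma Phi_in_YS: "l \<in> XS \<Longrightarrow> Phi l \<in> YS"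
proof -
  assume l: "l \<in> XS"
  have w: "Phi l \<in> WS"
  proof -
    have "\<forall>x. Phi l x \<longrightarrow> x \<in> Inl ` D \<union> Inr ` D"
    proof (intro allI impI)
      fix x assume "Phi l x" then show "x \<in> Inl ` D \<union> Inr ` D" unfolding Phi_def by (cases x) auto
    qed
    moreover have "\<forall>d\<in>D. Phi l (Inr (alpha d)) = Phi l (Inr d)" unfolding Phi_def by auto
    ultimately show ?thesis unfolding WS_def by blast
  qed
  have c: "Cm (Phi l) = (\<lambda>_. False)"
  proof (rule ext)
    fix y show "Cm (Phi l) y = False"
    proof (cases y)
      case (Inl v)
      show ?thesis
      proof (cases "v \<in> VS")
        case True
        then obtain x where x: "x \<in> D" "v = orb sigma x" using VS_cases by blast
        have "{d\<in>v. Phi l (Inl d)} = {d\<in>v. l (sigma d) \<noteq> l d}"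
          using VS_sub[OF True] unfolding Phi_def by auto
        moreover have "even (card {d\<in>v. l (sigma d) \<noteq> l d})"
        proof (rule even_transitions)
          show "finite v" using x sorb_fin by simp
          show "bij_betw sigma v v" unfolding bij_betw_def using x orb_image[OF sperm finD]
            permutes_inj[OF sperm] inj_on_subset by blast
        qed
        ultimately show ?thesis using Inl unfolding Cm_def by simp
      next
        case False then show ?thesis using Inl unfolding Cm_def by simp
      qed
    next
      case (Inr P)
      show ?thesis
      proof (cases "P \<in> FS")
        case True
        then obtain x where x: "x \<in> D" "P = orb phi x" using FS_cases by blast
        have "{d\<in>P. Phi l (Inr d) \<noteq> Phi l (Inl (alpha d))} = {d\<in>P. l (phi d) \<noteq> l d}"
          using FS_sub[OF True] unfolding Phi_def by (auto simp: phi_apply)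
        moreover have "even (card {d\<in>P. l (phi d) \<noteq> l d})"
        proof (rule even_transitions)
          show "finite P" using x porb_fin by simp
          show "bij_betw phi P P" unfolding bij_betw_def using x orb_image[OF pperm finD]
            permutes_inj[OF pperm] inj_on_subset by blast
        qed
        ultimately show ?thesis using Inr unfolding Cm_def by simp
      next
        case False then show ?thesis using Inr unfolding Cm_def by simp
      qed
    qed
  qed
  show ?thesis using w c unfolding YS_def by simp
qed

lemma YS_eq: "Phi ` XS = YS"
proof -
  have sub: "Phi ` XS \<subseteq> YS" using Phi_in_YS by blast
  have finY: "finite YS" using WS_fin unfolding YS_def by simp
  let ?F = "card FS"
  have F1: "?F \<ge> 1" using FS_pos .
  have c: "card D = 4 * ?F" "card ES = 2 * ?F" "card VS = ?F + 2" using counts by simp_all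
  have e1: "card D + card ES = 6 * ?F" using c by simp
  have "card YS * card (Cm ` WS) = 2 ^ (6 * ?F)"
    using WS_ker_im WS_card e1 by (metis power_add)
  moreover have "2 ^ (2 * ?F + 1) \<le> card (Cm ` WS)"
  proof -
    have e2: "card VS + (?F - 1) = 2 * ?F + 1" using c F1 by simp
    have "(2::nat) ^ card VS * 2 ^ (?F - 1) = 2 ^ (2 * ?F + 1)"
      using e2 by (metis power_add)
    then show ?thesis using Cm_img_card by simp
  qed
  ultimately have "card YS * 2 ^ (2 * ?F + 1) \<le> 2 ^ (6 * ?F)"
  proof -
    assume a1: "card YS * card (Cm ` WS) = 2 ^ (6 * ?F)" and a2: "2 ^ (2 * ?F + 1) \<le> card (Cm ` WS)"
    have "card YS * 2 ^ (2 * ?F + 1) \<le> card YS * card (Cm ` WS)" using a2 by (rule mult_le_mono2)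
    then show ?thesis using a1 by simp
  qed
  moreover have "(2::nat) ^ (6 * ?F) = 2 ^ (4 * ?F - 1) * 2 ^ (2 * ?F + 1)"
  proof -
    have "6 * ?F = (4 * ?F - 1) + (2 * ?F + 1)" using F1 by simp
    then show ?thesis by (metis power_add)
  qed
  ultimately have yc: "card YS \<le> 2 ^ (4 * ?F - 1)" by simp
  have "card XS = 2 ^ (4 * ?F)" using XS_card c by simp
  moreover have "(2::nat) ^ (4 * ?F) = 2 * 2 ^ (4 * ?F - 1)"
  proof -
    have "4 * ?F = Suc (4 * ?F - 1)" using F1 by simp
    then show ?thesis by (metis power_Suc)
  qed
  ultimately have "card (Phi ` XS) = 2 ^ (4 * ?F - 1)" using Phi_img_card by simp
  then have "card YS \<le> card (Phi ` XS)" using yc by simp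
  then show ?thesis using card_seteq[OF finY sub] by simp
qed

theorem H1:
  assumes sym: "\<And>d. d \<in> D \<Longrightarrow> a (alpha d) = a d"
    and vert: "\<And>v. v \<in> VS \<Longrightarrow> even (card {d\<in>v. s d})"
    and face: "\<And>P. P \<in> FS \<Longrightarrow> even (card {d\<in>P. a d \<noteq> s (alpha d)})"
  shows "\<exists>l. \<forall>d\<in>D. l (sigma d) = (l d \<noteq> s d) \<and> l (alpha d) = (l d \<noteq> a d)"
proof -
  define w where "w = (\<lambda>x. case x of Inl d \<Rightarrow> d \<in> D \<and> s d | Inr d \<Rightarrow> d \<in> D \<and> a d)"
  have wW: "w \<in> WS"
  proof -
    have "\<forall>x. w x \<longrightarrow> x \<in> Inl ` D \<union> Inr ` D"
    proof (intro allI impI)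
      fix x assume "w x" then show "x \<in> Inl ` D \<union> Inr ` D" unfolding w_def by (cases x) auto
    qed
    moreover have "\<forall>d\<in>D. w (Inr (alpha d)) = w (Inr d)" unfolding w_def using sym by auto
    ultimately show ?thesis unfolding WS_def by blast
  qed
  have c: "Cm w = (\<lambda>_. False)"
  proof (rule ext)
    fix y show "Cm w y = False"
    proof (cases y)
      case (Inl v)
      show ?thesis
      proof (cases "v \<in> VS")
        case True
        have "{d\<in>v. w (Inl d)} = {d\<in>v. s d}" using VS_sub[OF True] unfolding w_def by auto
        then show ?thesis using Inl vert[OF True] unfolding Cm_def by simp
      next
        case False then show ?thesis using Inl unfolding Cm_def by simp
      qed
    next
      case (Inr P)
      show ?thesis
      proof (cases "P \<in> FS")
        case True
        have "{d\<in>P. w (Inr d) \<noteq> w (Inl (alpha d))} = {d\<in>P. a d \<noteq> s (alpha d)}"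
          using FS_sub[OF True] unfolding w_def by auto
        then show ?thesis using Inr face[OF True] unfolding Cm_def by simp
      next
        case False then show ?thesis using Inr unfolding Cm_def by simp
      qed
    qed
  qed
  have "w \<in> Phi ` XS" using wW c YS_eq unfolding YS_def by simp
  then obtain l where l: "w = Phi l" by blast
  have "\<forall>d\<in>D. l (sigma d) = (l d \<noteq> s d) \<and> l (alpha d) = (l d \<noteq> a d)"
  proof
    fix d assume d: "d \<in> D"
    have "w (Inl d) = Phi l (Inl d)" "w (Inr d) = Phi l (Inr d)" using l by simp_all
    then show "l (sigma d) = (l d \<noteq> s d) \<and> l (alpha d) = (l d \<noteq> a d)"
      using d unfolding w_def Phi_def by auto
  qed
  then show ?thesis by blast
qed

end

context qmap
begin

abbreviation "S0 \<equiv> orb sigma z"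
abbreviation "S1 \<equiv> orb sigma ((phi ^^ 2) z)"
abbreviation "TO \<equiv> two_orientations D alpha sigma z"
abbreviation "SL \<equiv> strong_labelings D alpha sigma z"

definition Psi :: "('d \<Rightarrow> nat) \<Rightarrow> 'd set" where
  "Psi l = {d\<in>D. l d \<noteq> l (inv sigma d)}"

lemma S0_VS: "S0 \<in> VS" using VS_I zD .
lemma S1_VS: "S1 \<in> VS" using VS_I zD funpow_permutes_in[OF pperm] by blast

lemma S01: "S0 \<noteq> S1"
proof
  assume e: "S0 = S1"
  have "orb phi z \<in> FS" using FS_I zD .
  then have c: "card (orb sigma ` orb phi z) = 4" using faces4 by blast
  have "orb sigma ` orb phi z = {S0, orb sigma (phi z), S1, orb sigma ((phi ^^ 3) z)}"
    using porb_enum[OF zD] by simp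
  also have "\<dots> = {S0, orb sigma (phi z), orb sigma ((phi ^^ 3) z)}" using e by auto
  finally have "card (orb sigma ` orb phi z) \<le> 3" by (simp add: card_insert_if)
  then show False using c by simp
qed

lemma TO_D:
  assumes "Ot \<in> TO"
  shows "Ot \<subseteq> D" "\<And>d. d \<in> D \<Longrightarrow> d \<in> Ot \<longleftrightarrow> alpha d \<notin> Ot"
    "\<And>d. d \<in> D \<Longrightarrow> orb sigma d \<noteq> S0 \<Longrightarrow> orb sigma d \<noteq> S1 \<Longrightarrow> card {e\<in>orb sigma d. e \<in> Ot} = 2"
proof -
  note h = assms[unfolded two_orientations_def s0_vertex_def s1_vertex_def mem_Collect_eq]
  show "Ot \<subseteq> D" using h[THEN conjunct1] .
  show "\<And>d. d \<in> D \<Longrightarrow> d \<in> Ot \<longleftrightarrow> alpha d \<notin> Ot" using h by blast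
  show "\<And>d. d \<in> D \<Longrightarrow> orb sigma d \<noteq> S0 \<Longrightarrow> orb sigma d \<noteq> S1 \<Longrightarrow> card {e\<in>orb sigma d. e \<in> Ot} = 2"
    using h by blast
qed

lemma TO_card:
  assumes Ot: "Ot \<in> TO"
  shows "card Ot = card ES"
proof -
  have "bij_betw (\<lambda>d. {d, alpha d}) Ot ES"
  proof (rule bij_betw_imageI)
    show "inj_on (\<lambda>d. {d, alpha d}) Ot"
    proof (rule inj_onI)
      fix d d' assume d: "d \<in> Ot" "d' \<in> Ot" "{d, alpha d} = {d', alpha d'}"
      then have "d = d' \<or> d = alpha d'" by auto
      moreover have "d = alpha d' \<Longrightarrow> False"
        using TO_D(2)[OF Ot, of d'] d TO_D(1)[OF Ot] by auto
      ultimately show "d = d'" by blast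
    qed
    show "(\<lambda>d. {d, alpha d}) ` Ot = ES"
    proof
      show "(\<lambda>d. {d, alpha d}) ` Ot \<subseteq> ES" using TO_D(1)[OF Ot] unfolding map_edges_def by blast
      show "ES \<subseteq> (\<lambda>d. {d, alpha d}) ` Ot"
      proof
        fix e assume "e \<in> ES"
        then obtain d where d: "d \<in> D" "e = {d, alpha d}" unfolding map_edges_def by blast
        show "e \<in> (\<lambda>d. {d, alpha d}) ` Ot"
        proof (cases "d \<in> Ot")
          case True then show ?thesis using d by blast
        next
          case False
          then have "alpha d \<in> Ot" using TO_D(2)[OF Ot d(1)] by blast
          moreover have "e = {alpha d, alpha (alpha d)}" using d by auto
          ultimately show ?thesis by blast
        qed
      qed
    qed
  qed
  then show ?thesis by (rule bij_betw_same_card)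
qed

lemma TO_S01:
  assumes Ot: "Ot \<in> TO"
  shows "S0 \<inter> Ot = {}" "S1 \<inter> Ot = {}"
proof -
  have fin: "\<And>v. v \<in> VS \<Longrightarrow> finite (v \<inter> Ot)" using VS_sub finD finite_subset by blast
  have U: "Ot = (\<Union>v\<in>VS. v \<inter> Ot)"
  proof
    show "Ot \<subseteq> (\<Union>v\<in>VS. v \<inter> Ot)"
    proof
      fix d assume "d \<in> Ot"
      moreover then have "d \<in> D" using TO_D(1)[OF Ot] by blast
      ultimately have "orb sigma d \<in> VS" "d \<in> orb sigma d \<inter> Ot" using VS_I orb_self by auto
      then show "d \<in> (\<Union>v\<in>VS. v \<inter> Ot)" by (rule UN_I)
    qed
  qed blast
  have "card Ot = (\<Sum>v\<in>VS. card (v \<inter> Ot))"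
  proof -
    have "card (\<Union>v\<in>VS. v \<inter> Ot) = (\<Sum>v\<in>VS. card (v \<inter> Ot))"
    proof (rule card_UN_disjoint)
      show "finite VS" by (rule VS_fin)
      show "\<forall>v\<in>VS. finite (v \<inter> Ot)" using fin by blast
      show "\<forall>i\<in>VS. \<forall>j\<in>VS. i \<noteq> j \<longrightarrow> (i \<inter> Ot) \<inter> (j \<inter> Ot) = {}"
      proof (intro ballI impI)
        fix i j assume ij: "i \<in> VS" "j \<in> VS" "i \<noteq> j"
        show "(i \<inter> Ot) \<inter> (j \<inter> Ot) = {}"
        proof (rule ccontr)
          assume "(i \<inter> Ot) \<inter> (j \<inter> Ot) \<noteq> {}"
          then obtain x where "x \<in> i" "x \<in> j" by blast
          then show False using VS_mem[OF ij(1)] VS_mem[OF ij(2)] ij(3) by simp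
        qed
      qed
    qed
    then show ?thesis using U by simp
  qed
  also have "\<dots> = (\<Sum>v\<in>{S0, S1}. card (v \<inter> Ot)) + (\<Sum>v\<in>VS - {S0, S1}. card (v \<inter> Ot))"
  proof -
    have "{S0, S1} \<subseteq> VS" using S0_VS S1_VS by blast
    then show ?thesis using sum.subset_diff[OF _ VS_fin] by (metis add.commute)
  qed
  also have "(\<Sum>v\<in>VS - {S0, S1}. card (v \<inter> Ot)) = (\<Sum>v\<in>VS - {S0, S1}. 2)"
  proof (rule sum.cong[OF refl])
    fix v assume v: "v \<in> VS - {S0, S1}"
    then obtain d where d: "d \<in> D" "v = orb sigma d" using VS_cases by blast
    have "card {e\<in>orb sigma d. e \<in> Ot} = 2" using TO_D(3)[OF Ot d(1)] v d by auto
    moreover have "{e\<in>orb sigma d. e \<in> Ot} = v \<inter> Ot" using d by auto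
    ultimately show "card (v \<inter> Ot) = 2" by simp
  qed
  also have "\<dots> = 2 * (card VS - 2)"
  proof -
    have "card (VS - {S0, S1}) = card VS - 2"
      using S0_VS S1_VS S01 VS_fin by (simp add: card_Diff_subset)
    then show ?thesis by simp
  qed
  finally have "card Ot = card (S0 \<inter> Ot) + card (S1 \<inter> Ot) + 2 * (card VS - 2)"
    using S01 by simp
  then have "card (S0 \<inter> Ot) = 0" "card (S1 \<inter> Ot) = 0" using TO_card[OF Ot] counts by simp_all
  then show "S0 \<inter> Ot = {}" "S1 \<inter> Ot = {}" using fin S0_VS S1_VS by auto
qed

lemma SL_D:
  assumes "l \<in> SL"
  shows "l \<in> D \<rightarrow>\<^sub>E {0, 1}"
    "\<And>e. e \<in> D \<Longrightarrow> orb sigma e = S0 \<Longrightarrow> l e = 0"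
    "\<And>e. e \<in> D \<Longrightarrow> orb sigma e = S1 \<Longrightarrow> l e = 1"
    "\<And>v. v \<in> D \<Longrightarrow> orb sigma v \<noteq> S0 \<Longrightarrow> orb sigma v \<noteq> S1 \<Longrightarrow>
          (\<exists>d\<in>orb sigma v. \<exists>k. 0 < k \<and> k < card (orb sigma v) \<and>
             (\<forall>j < card (orb sigma v). l ((sigma ^^ j) d) = (if j < k then 1 else 0)))"
    "\<And>d. d \<in> D \<Longrightarrow> (l d = l (inv sigma d)) \<noteq> (l (alpha d) = l (inv sigma (alpha d)))"
    "\<And>P. P \<in> FS \<Longrightarrow> P \<noteq> orb phi z \<Longrightarrow>
          (\<exists>f\<in>P. l (alpha f) = 0 \<and> l (alpha (phi f)) = 0
                 \<and> l (alpha ((phi ^^ 2) f)) = 1 \<and> l (alpha ((phi ^^ 3) f)) = 1)"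
    "l (alpha ((phi ^^ 3) z)) = 0" "l (alpha ((phi ^^ 2) z)) = 0"
    "l (alpha (phi z)) = 1" "l (alpha z) = 1"
proof -
  note h = assms[unfolded strong_labelings_def Let_def s0_vertex_def s1_vertex_def outer_face_def mem_Collect_eq]
  note c2 = h[THEN conjunct2]
  note c3 = c2[THEN conjunct2]
  note c4 = c3[THEN conjunct2]
  note c5 = c4[THEN conjunct2]
  note c6 = c5[THEN conjunct2]
  note c7 = c6[THEN conjunct2]
  note c8 = c7[THEN conjunct2]
  show "l \<in> D \<rightarrow>\<^sub>E {0, 1}" using h[THEN conjunct1] .
  show "\<And>e. e \<in> D \<Longrightarrow> orb sigma e = S0 \<Longrightarrow> l e = 0" using c2[THEN conjunct1] by blast
  show "\<And>e. e \<in> D \<Longrightarrow> orb sigma e = S1 \<Longrightarrow> l e = 1" using c2[THEN conjunct1] by blast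
  show "\<And>v. v \<in> D \<Longrightarrow> orb sigma v \<noteq> S0 \<Longrightarrow> orb sigma v \<noteq> S1 \<Longrightarrow>
          (\<exists>d\<in>orb sigma v. \<exists>k. 0 < k \<and> k < card (orb sigma v) \<and>
             (\<forall>j < card (orb sigma v). l ((sigma ^^ j) d) = (if j < k then 1 else 0)))"
    using c3[THEN conjunct1] by blast
  show "\<And>d. d \<in> D \<Longrightarrow> (l d = l (inv sigma d)) \<noteq> (l (alpha d) = l (inv sigma (alpha d)))"
    using c4[THEN conjunct1] by blast
  show "\<And>P. P \<in> FS \<Longrightarrow> P \<noteq> orb phi z \<Longrightarrow>
          (\<exists>f\<in>P. l (alpha f) = 0 \<and> l (alpha (phi f)) = 0
                 \<and> l (alpha ((phi ^^ 2) f)) = 1 \<and> l (alpha ((phi ^^ 3) f)) = 1)"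
    using c5[THEN conjunct1] by blast
  show "l (alpha ((phi ^^ 3) z)) = 0" using c6[THEN conjunct1] .
  show "l (alpha ((phi ^^ 2) z)) = 0" using c7[THEN conjunct1] .
  show "l (alpha (phi z)) = 1" using c8[THEN conjunct1] .
  show "l (alpha z) = 1" using c8[THEN conjunct2] .
qed

lemma SL_bin: "l \<in> SL \<Longrightarrow> d \<in> D \<Longrightarrow> l d = 0 \<or> l d = 1"
  using SL_D(1) by (auto simp: PiE_iff)

end

context qmap
begin

lemma inv_s_pow: "0 < j \<Longrightarrow> inv sigma ((sigma ^^ j) d) = (sigma ^^ (j - 1)) d"
proof -
  assume "0 < j"
  then have "(sigma ^^ j) d = sigma ((sigma ^^ (j - 1)) d)"
    by (metis Suc_pred' comp_apply funpow.simps(2))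
  then show ?thesis by simp
qed

lemma sorb_enum:
  assumes "d \<in> D"
  shows "0 < card (orb sigma d)" "(sigma ^^ card (orb sigma d)) d = d"
    "inj_on (\<lambda>k. (sigma ^^ k) d) {..<card (orb sigma d)}"
    "orb sigma d = (\<lambda>k. (sigma ^^ k) d) ` {..<card (orb sigma d)}"
  using orb_enum[OF sperm finD] by auto

lemma inv_s_0:
  assumes "d \<in> D"
  shows "inv sigma d = (sigma ^^ (card (orb sigma d) - 1)) d"
proof -
  have "inv sigma ((sigma ^^ card (orb sigma d)) d) = (sigma ^^ (card (orb sigma d) - 1)) d"
    by (rule inv_s_pow[OF sorb_enum(1)[OF assms]])
  then show ?thesis using sorb_enum(2)[OF assms] by simp
qed

lemma psi_TO:
  assumes l: "l \<in> SL"
  shows "Psi l \<in> TO"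
proof -
  have p1: "Psi l \<subseteq> D" unfolding Psi_def by blast
  have p2: "\<forall>d\<in>D. d \<in> Psi l \<longleftrightarrow> alpha d \<notin> Psi l"
  proof
    fix d assume d: "d \<in> D"
    have a: "d \<in> Psi l \<longleftrightarrow> l d \<noteq> l (inv sigma d)" unfolding Psi_def using d by simp
    have b: "alpha d \<in> Psi l \<longleftrightarrow> l (alpha d) \<noteq> l (inv sigma (alpha d))" unfolding Psi_def using d by simp
    show "d \<in> Psi l \<longleftrightarrow> alpha d \<notin> Psi l" using SL_D(5)[OF l d] unfolding a b by blast
  qed
  have p3: "\<forall>d\<in>D. orb sigma d \<noteq> S0 \<and> orb sigma d \<noteq> S1 \<longrightarrow> card {e\<in>orb sigma d. e \<in> Psi l} = 2"
  proof (intro ballI impI)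
    fix d assume d: "d \<in> D" and nd: "orb sigma d \<noteq> S0 \<and> orb sigma d \<noteq> S1"
    obtain d0 k where d0: "d0 \<in> orb sigma d" and k: "0 < k" "k < card (orb sigma d)"
      and pat: "\<forall>j < card (orb sigma d). l ((sigma ^^ j) d0) = (if j < k then 1 else 0)"
      using SL_D(4)[OF l d] nd by blast
    have S: "orb sigma d0 = orb sigma d" using d0 sorb_iff by blast
    have d0D: "d0 \<in> D" using d0 sorb_sub[OF d] by blast
    define n where "n = card (orb sigma d0)"
    have nn: "n = card (orb sigma d)" using S n_def by simp
    have n0: "0 < n" using sorb_enum(1)[OF d0D] n_def by simp
    have inj: "inj_on (\<lambda>k. (sigma ^^ k) d0) {..<n}" using sorb_enum(3)[OF d0D] n_def by simp
    have en: "orb sigma d = (\<lambda>k. (sigma ^^ k) d0) ` {..<n}" using sorb_enum(4)[OF d0D] n_def S by simp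
    have inD: "\<And>j. (sigma ^^ j) d0 \<in> D" using funpow_permutes_in[OF sperm d0D] .
    have mem: "(sigma ^^ j) d0 \<in> Psi l \<longleftrightarrow> j = 0 \<or> j = k" if j: "j < n" for j
    proof (cases "j = 0")
      case True
      have "inv sigma d0 = (sigma ^^ (n - 1)) d0" using inv_s_0[OF d0D] n_def by simp
      moreover have "l ((sigma ^^ (n - 1)) d0) = 0" using pat nn k n0 by auto
      moreover have "l d0 = 1" using pat[rule_format, of 0] nn n0 k by simp
      ultimately show ?thesis using True d0D unfolding Psi_def by simp
    next
      case False
      have "inv sigma ((sigma ^^ j) d0) = (sigma ^^ (j - 1)) d0" using inv_s_pow False by simp
      moreover have "l ((sigma ^^ j) d0) = (if j < k then 1 else 0)" using pat j nn by simp
      moreover have "l ((sigma ^^ (j - 1)) d0) = (if j - 1 < k then 1 else 0)" using pat j nn by simp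
      ultimately show ?thesis using False inD unfolding Psi_def by auto
    qed
    have "{e\<in>orb sigma d. e \<in> Psi l} = (\<lambda>k. (sigma ^^ k) d0) ` {0, k}"
    proof
      show "{e\<in>orb sigma d. e \<in> Psi l} \<subseteq> (\<lambda>k. (sigma ^^ k) d0) ` {0, k}"
      proof
        fix e assume "e \<in> {e\<in>orb sigma d. e \<in> Psi l}"
        then obtain j where "j < n" "e = (sigma ^^ j) d0" "e \<in> Psi l" using en by auto
        then show "e \<in> (\<lambda>k. (sigma ^^ k) d0) ` {0, k}" using mem by auto
      qed
      show "(\<lambda>k. (sigma ^^ k) d0) ` {0, k} \<subseteq> {e\<in>orb sigma d. e \<in> Psi l}"
      proof -
        have A: "(sigma ^^ 0) d0 \<in> Psi l" using mem[OF n0] by simp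
        have B: "(sigma ^^ k) d0 \<in> Psi l" using mem[of k] k nn by simp
        have C: "\<And>j. (sigma ^^ j) d0 \<in> orb sigma d" using S orb_funpow by metis
        show ?thesis using A B C by blast
      qed
    qed
    moreover have "card ((\<lambda>k. (sigma ^^ k) d0) ` {0, k}) = 2"
    proof -
      have sub: "{0, k} \<subseteq> {..<n}" using k nn n0 by auto
      have "inj_on (\<lambda>k. (sigma ^^ k) d0) {0, k}" by (rule inj_on_subset[OF inj sub])
      then show ?thesis using k by (simp add: card_image)
    qed
    ultimately show "card {e\<in>orb sigma d. e \<in> Psi l} = 2" by simp
  qed
  show ?thesis unfolding two_orientations_def s0_vertex_def s1_vertex_def mem_Collect_eq
    using p1 p2 p3 by blast
qed

end

lemma bin4:
  fixes a1 b1 a2 b2 :: nat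
  assumes "a1 = 0 \<or> a1 = 1" "b1 = 0 \<or> b1 = 1" "a2 = 0 \<or> a2 = 1" "b2 = 0 \<or> b2 = 1"
    and "(a1 \<noteq> b1) = (a2 \<noteq> b2)"
  shows "(a1 = a2) = (b1 = b2)"
  using assms by auto

lemma bin4':
  fixes P Q R S :: nat
  assumes "P = 0 \<or> P = 1" "Q = 0 \<or> Q = 1" "R = 0 \<or> R = 1" "S = 0 \<or> S = 1"
    and "(Q = P) \<noteq> (R = S)"
  shows "(Q \<noteq> S) = (R = P)"
  using assms by auto

context qmap
begin

lemma black_ex: "\<exists>bl. (\<forall>d\<in>D. bl (sigma d) = bl d \<and> bl (alpha d) = (\<not> bl d)) \<and> bl z"
proof -
  have "\<exists>l. \<forall>d\<in>D. l (sigma d) = (l d \<noteq> False) \<and> l (alpha d) = (l d \<noteq> True)"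
  proof (rule H1)
    show "\<And>d. d \<in> D \<Longrightarrow> True = True" by simp
    show "\<And>v. v \<in> VS \<Longrightarrow> even (card {d\<in>v. False})" by simp
    show "\<And>P. P \<in> FS \<Longrightarrow> even (card {d\<in>P. True \<noteq> False})" using faces4 by simp
  qed
  then obtain l where l: "\<forall>d\<in>D. l (sigma d) = l d \<and> l (alpha d) = (\<not> l d)" by auto
  show ?thesis
  proof (cases "l z")
    case True then show ?thesis using l by blast
  next
    case False
    then show ?thesis using l by (intro exI[where x="\<lambda>d. \<not> l d"]) auto
  qed
qed

end

locale qcol = qmap D alpha sigma z for D :: "'d set" and alpha sigma :: "'d \<Rightarrow> 'd" and z :: 'd +
  fixes bl :: "'d \<Rightarrow> bool"
  assumes bl_s: "d \<in> D \<Longrightarrow> bl (sigma d) = bl d"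
    and bl_a: "d \<in> D \<Longrightarrow> bl (alpha d) = (\<not> bl d)"
    and bl_z: "bl z"
begin

lemma bl_phi: "d \<in> D \<Longrightarrow> bl (phi d) = (\<not> bl d)"
  using bl_s bl_a by (simp add: phi_apply)

lemma bl_si: "d \<in> D \<Longrightarrow> bl (inv sigma d) = bl d"
  using bl_s[of "inv sigma d"] by simp

lemma bl_phin: "d \<in> D \<Longrightarrow> bl ((phi ^^ n) d) = (bl d = even n)"
proof (induct n)
  case 0 then show ?case by simp
next
  case (Suc n)
  have "(phi ^^ n) d \<in> D" using funpow_permutes_in[OF pperm Suc(2)] .
  then show ?case using Suc bl_phi by simp
qed

lemma alt4:
  assumes h1: "l (alpha f) = l (alpha (phi f))" and h2: "l (alpha ((phi ^^ 2) f)) = l (alpha ((phi ^^ 3) f))"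
    and h3: "l (alpha (phi f)) \<noteq> l (alpha ((phi ^^ 2) f))" and f: "f \<in> D" and k: "k < 4"
  shows "(l (alpha ((phi ^^ (k + 2)) f)) \<noteq> l (alpha ((phi ^^ (k + 1)) f)))
       = (l (alpha ((phi ^^ (k + 1)) f)) = l (alpha ((phi ^^ k) f)))"
proof -
  have p4: "(phi ^^ 4) f = f" using phi4[OF f] .
  have p5: "(phi ^^ 5) f = phi f"
  proof -
    have "(phi ^^ 5) f = phi ((phi ^^ 4) f)" by (simp add: numeral_eq_Suc)
    then show ?thesis using p4 by simp
  qed
  have "k = 0 \<or> k = 1 \<or> k = 2 \<or> k = 3" using k by auto
  then show ?thesis
  proof (elim disjE)
    assume "k = 0" then show ?thesis using h1 h3 by (simp add: numeral_eq_Suc)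
  next
    assume "k = 1" then show ?thesis using h2 h3 by (simp add: numeral_eq_Suc)
  next
    assume "k = 2"
    then show ?thesis using h1 h2 h3 p4 by (simp add: numeral_eq_Suc)
  next
    assume "k = 3"
    then show ?thesis using h1 h2 h3 p4 p5 by (simp add: numeral_eq_Suc)
  qed
qed

lemma s_a_phi: "sigma (alpha y) = phi y" by (simp add: phi_apply)

lemma T_alt:
  assumes l: "l \<in> SL" and b: "b \<in> D"
  shows "(l (alpha (sigma (alpha (sigma b)))) \<noteq> l (alpha (sigma b))) = (l (alpha (sigma b)) = l b)"
proof -
  define x where "x = alpha b"
  have x: "x \<in> D" using b x_def by simp
  have bx: "b = alpha x" using x_def by simp
  obtain f k where f: "f \<in> D" and k: "k < 4" and xf: "x = (phi ^^ k) f"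
    and h1: "l (alpha f) = l (alpha (phi f))" and h2: "l (alpha ((phi ^^ 2) f)) = l (alpha ((phi ^^ 3) f))"
    and h3: "l (alpha (phi f)) \<noteq> l (alpha ((phi ^^ 2) f))"
  proof -
    have mem: "\<exists>k<4. x = (phi ^^ k) f" if "f \<in> D" "x \<in> orb phi f" for f
    proof -
      have "x \<in> {f, phi f, (phi ^^ 2) f, (phi ^^ 3) f}" using that porb_enum by simp
      then show ?thesis
      proof (elim insertE)
        assume "x = f" then show ?thesis by (intro exI[where x=0]) simp
      next
        assume "x = phi f" then show ?thesis by (intro exI[where x=1]) simp
      next
        assume "x = (phi ^^ 2) f" then show ?thesis by (intro exI[where x=2]) simp
      next
        assume "x = (phi ^^ 3) f" then show ?thesis by (intro exI[where x=3]) simp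
      qed simp
    qed
    show ?thesis
    proof (cases "orb phi x = orb phi z")
      case True
      then have "x \<in> orb phi z" using porb_iff by blast
      then obtain k where "k < 4" "x = (phi ^^ k) z" using mem zD by blast
      moreover have "l (alpha z) = l (alpha (phi z))" "l (alpha ((phi ^^ 2) z)) = l (alpha ((phi ^^ 3) z))"
        "l (alpha (phi z)) \<noteq> l (alpha ((phi ^^ 2) z))" using SL_D(7-10)[OF l] by simp_all
      ultimately show ?thesis using that zD by blast
    next
      case False
      obtain f where "f \<in> orb phi x" "l (alpha f) = 0" "l (alpha (phi f)) = 0"
        "l (alpha ((phi ^^ 2) f)) = 1" "l (alpha ((phi ^^ 3) f)) = 1"
        using SL_D(6)[OF l FS_I[OF x] False] by blast
      moreover have "f \<in> D" using \<open>f \<in> orb phi x\<close> porb_sub[OF x] by blast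
      moreover have "x \<in> orb phi f" using \<open>f \<in> orb phi x\<close> porb_iff by metis
      ultimately show ?thesis using that mem by (metis zero_neq_one)
    qed
  qed
  have e1: "alpha (sigma b) = alpha ((phi ^^ (k + 1)) f)" using bx xf s_a_phi by simp
  have e2: "alpha (sigma (alpha (sigma b))) = alpha ((phi ^^ (k + 2)) f)"
    using bx xf s_a_phi by (simp add: numeral_eq_Suc)
  have e0: "b = alpha ((phi ^^ k) f)" using bx xf by simp
  show ?thesis using alt4[OF h1 h2 h3 f k] unfolding e0 by (simp add: s_a_phi numeral_eq_Suc)
qed

end

context qcol
begin

lemma T_edge:
  assumes l: "l \<in> SL" and d: "d \<in> D"
  shows "(l (alpha (sigma (inv sigma (alpha (sigma d))))) \<noteq> l (inv sigma (alpha (sigma d))))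
       = (l (alpha (sigma d)) = l d)"
proof -
  have sd: "sigma d \<in> D" using d by simp
  have g: "(l (sigma d) = l d) \<noteq> (l (alpha (sigma d)) = l (inv sigma (alpha (sigma d))))"
    using SL_D(5)[OF l sd] by simp
  have "(l (sigma d) \<noteq> l (inv sigma (alpha (sigma d)))) = (l (alpha (sigma d)) = l d)"
    by (rule bin4'[OF SL_bin[OF l d] SL_bin[OF l sd] SL_bin[OF l] SL_bin[OF l] g]) (use d in simp_all)
  then show ?thesis by simp
qed

lemma SL_C:
  assumes l: "l \<in> SL" and b: "b \<in> D"
  shows "(l (alpha (sigma b)) \<noteq> l b) = bl b"
proof -
  define dl where "dl b = ((l (alpha (sigma b)) \<noteq> l b) \<noteq> bl b)" for b
  have d1: "dl (alpha (sigma b)) = dl b" if b: "b \<in> D" for b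
  proof -
    have "bl (alpha (sigma b)) = (\<not> bl b)" using bl_a bl_s b by simp
    then show ?thesis using T_alt[OF l b] unfolding dl_def by auto
  qed
  have d2: "dl (inv sigma (alpha (sigma d))) = dl d" if d: "d \<in> D" for d
  proof -
    have "bl (inv sigma (alpha (sigma d))) = (\<not> bl d)" using bl_si bl_a bl_s d by simp
    then show ?thesis using T_edge[OF l d] unfolding dl_def by auto
  qed
  have d3: "dl (inv sigma x) = dl x" if x: "x \<in> D" for x
  proof -
    define d where "d = inv sigma (alpha x)"
    have dD: "d \<in> D" using x d_def by simp
    have e: "alpha (sigma d) = x" using d_def by simp
    show ?thesis using d1[OF dD] d2[OF dD] unfolding e by simp
  qed
  have ds: "dl (sigma y) = dl y" if y: "y \<in> D" for y
    using d3[of "sigma y"] y by simp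
  have da: "dl (alpha y) = dl y" if y: "y \<in> D" for y
  proof -
    have "alpha y = alpha (sigma (inv sigma y))" by simp
    then have "dl (alpha y) = dl (inv sigma y)" using d1[of "inv sigma y"] y by simp
    then show ?thesis using d3[OF y] by simp
  qed
  define b0 where "b0 = alpha ((phi ^^ 3) z)"
  have b0D: "b0 \<in> D" using b0_def funpow_permutes_in[OF pperm zD] by simp
  have sb0: "sigma b0 = z"
  proof -
    have "sigma b0 = phi ((phi ^^ 3) z)" using b0_def s_a_phi by simp
    also have "\<dots> = (phi ^^ 4) z" by (simp add: numeral_eq_Suc)
    finally show ?thesis using phi4[OF zD] by simp
  qed
  have "dl b0 = False"
  proof -
    have "l (alpha z) \<noteq> l b0" using SL_D(7,10)[OF l] b0_def by simp
    moreover have "bl b0"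
    proof -
      have "(phi ^^ 3) z \<in> D" using funpow_permutes_in[OF pperm zD] .
      then show ?thesis using b0_def bl_a bl_phin[OF zD, of 3] bl_z by simp
    qed
    ultimately show ?thesis unfolding dl_def using sb0 by simp
  qed
  moreover have "dl b0 = dl z" using conn_const[of dl, OF da ds b0D] .
  moreover have "dl b = dl z" using conn_const[of dl, OF da ds b] .
  ultimately show ?thesis unfolding dl_def by simp
qed

lemma psi_inj: "inj_on Psi SL"
proof (rule inj_onI)
  fix l1 l2 assume l1: "l1 \<in> SL" and l2: "l2 \<in> SL" and e: "Psi l1 = Psi l2"
  define m where "m d = (l1 d = l2 d)" for d
  have pe: "(l1 x \<noteq> l1 (inv sigma x)) = (l2 x \<noteq> l2 (inv sigma x))" if x: "x \<in> D" for x
  proof -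
    have "x \<in> Psi l1 \<longleftrightarrow> x \<in> Psi l2" using e by simp
    then show ?thesis using x unfolding Psi_def by simp
  qed
  have ms: "m (sigma d) = m d" if d: "d \<in> D" for d
  proof -
    have sd: "sigma d \<in> D" using d by simp
    have "(l1 (sigma d) \<noteq> l1 d) = (l2 (sigma d) \<noteq> l2 d)" using pe[OF sd] by simp
    then show ?thesis unfolding m_def
      by (rule bin4[OF SL_bin[OF l1 sd] SL_bin[OF l1 d] SL_bin[OF l2 sd] SL_bin[OF l2 d]])
  qed
  have mc: "m (alpha (sigma b)) = m b" if b: "b \<in> D" for b
  proof -
    have ab: "alpha (sigma b) \<in> D" using b by simp
    have "(l1 (alpha (sigma b)) \<noteq> l1 b) = (l2 (alpha (sigma b)) \<noteq> l2 b)"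
      using SL_C[OF l1 b] SL_C[OF l2 b] by simp
    then show ?thesis unfolding m_def
      by (rule bin4[OF SL_bin[OF l1 ab] SL_bin[OF l1 b] SL_bin[OF l2 ab] SL_bin[OF l2 b]])
  qed
  have ma: "m (alpha y) = m y" if y: "y \<in> D" for y
  proof -
    have "m (alpha (sigma (inv sigma y))) = m (inv sigma y)" using mc[of "inv sigma y"] y by simp
    moreover have "m (sigma (inv sigma y)) = m (inv sigma y)" using ms[of "inv sigma y"] y by simp
    ultimately show ?thesis by simp
  qed
  have mz: "m z" using SL_D(2)[OF l1 zD] SL_D(2)[OF l2 zD] unfolding m_def by simp
  show "l1 = l2"
  proof (rule ext)
    fix x show "l1 x = l2 x"
    proof (cases "x \<in> D")
      case True
      then show ?thesis using conn_const[of m, OF ma ms True] mz unfolding m_def by simp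
    next
      case False
      then show ?thesis using PiE_arb[OF SL_D(1)[OF l1] False] PiE_arb[OF SL_D(1)[OF l2] False] by simp
    qed
  qed
qed

end

context qcol
begin

lemma card_bij_pred:
  assumes "finite S" "bij_betw p S S"
  shows "card {x\<in>S. Q (p x)} = card {x\<in>S. Q x}"
proof -
  have "bij_betw p {x\<in>S. Q (p x)} {x\<in>S. Q x}"
    using assms(2) unfolding bij_betw_def inj_on_def by auto
  then show ?thesis by (rule bij_betw_same_card)
qed

lemma sbij: "x \<in> D \<Longrightarrow> bij_betw sigma (orb sigma x) (orb sigma x)"
  unfolding bij_betw_def using orb_image[OF sperm finD] permutes_inj[OF sperm] inj_on_subset by blast

lemma pbij: "x \<in> D \<Longrightarrow> bij_betw phi (orb phi x) (orb phi x)"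
  unfolding bij_betw_def using orb_image[OF pperm finD] permutes_inj[OF pperm] inj_on_subset by blast

lemma face_bl2:
  assumes f: "f \<in> D"
  shows "card {d\<in>orb phi f. bl d} = 2"
proof -
  have P: "orb phi f = {f, phi f, (phi ^^ 2) f, (phi ^^ 3) f}" using porb_enum[OF f] .
  have b: "bl (phi f) = (\<not> bl f)" "bl ((phi ^^ 2) f) = bl f" "bl ((phi ^^ 3) f) = (\<not> bl f)"
    using bl_phin[OF f, of 1] bl_phin[OF f, of 2] bl_phin[OF f, of 3] by simp_all
  have ne: "f \<noteq> (phi ^^ 2) f" "phi f \<noteq> (phi ^^ 3) f"
    using porb_distinct[OF f, of 0 2] porb_distinct[OF f, of 1 3] by auto
  show ?thesis
  proof (cases "bl f")
    case True
    then have "{d\<in>orb phi f. bl d} = {f, (phi ^^ 2) f}" unfolding P using b by auto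
    then show ?thesis using ne by simp
  next
    case False
    then have "{d\<in>orb phi f. bl d} = {phi f, (phi ^^ 3) f}" unfolding P using b by auto
    then show ?thesis using ne by simp
  qed
qed

lemma exists_lab:
  assumes Ot: "Ot \<in> TO"
  shows "\<exists>l. (\<forall>d\<in>D. l (sigma d) = (l d \<noteq> (sigma d \<in> Ot)) \<and> l (alpha d) = (l d \<noteq> ((d \<in> Ot) \<noteq> bl d))) \<and> \<not> l z"
proof -
  have "\<exists>l. \<forall>d\<in>D. l (sigma d) = (l d \<noteq> (sigma d \<in> Ot)) \<and> l (alpha d) = (l d \<noteq> ((d \<in> Ot) \<noteq> bl d))"
  proof (rule H1)
    fix d assume d: "d \<in> D"
    show "((alpha d \<in> Ot) \<noteq> bl (alpha d)) = ((d \<in> Ot) \<noteq> bl d)"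
      using TO_D(2)[OF Ot d] bl_a[OF d] by auto
  next
    fix v assume v: "v \<in> VS"
    then obtain x where x: "x \<in> D" "v = orb sigma x" using VS_cases by blast
    have "card {d\<in>v. sigma d \<in> Ot} = card {d\<in>v. d \<in> Ot}"
      using card_bij_pred[OF sorb_fin sbij[OF x(1)], of "\<lambda>d. d \<in> Ot"] x by simp
    moreover have "card {d\<in>v. d \<in> Ot} = 0 \<or> card {d\<in>v. d \<in> Ot} = 2"
    proof (cases "v = S0 \<or> v = S1")
      case True
      then have "{d\<in>v. d \<in> Ot} = {}" using TO_S01[OF Ot] by auto
      then show ?thesis by (metis card.empty)
    next
      case False
      then show ?thesis using TO_D(3)[OF Ot x(1)] x by auto
    qed
    ultimately show "even (card {d\<in>v. sigma d \<in> Ot})" by auto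
  next
    fix P assume P: "P \<in> FS"
    then obtain f where f: "f \<in> D" "P = orb phi f" using FS_cases by blast
    have fin: "finite P" using f porb_fin by simp
    have e: "{d\<in>P. ((d \<in> Ot) \<noteq> bl d) \<noteq> (sigma (alpha d) \<in> Ot)} = {d\<in>P. ((d \<in> Ot) \<noteq> bl d) \<noteq> (phi d \<in> Ot)}"
      by (simp add: s_a_phi)
    have c1: "card {d\<in>P. phi d \<in> Ot} = card {d\<in>P. d \<in> Ot}"
      using card_bij_pred[OF porb_fin pbij[OF f(1)], of "\<lambda>d. d \<in> Ot"] f by simp
    have c2: "card {d\<in>P. bl d} = 2" using face_bl2 f by simp
    have "odd (card {d\<in>P. ((d \<in> Ot) \<noteq> bl d) \<noteq> (phi d \<in> Ot)})
        = (odd (card {d\<in>P. (d \<in> Ot) \<noteq> bl d}) \<noteq> odd (card {d\<in>P. phi d \<in> Ot}))"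
      by (rule parity_xor[OF fin])
    moreover have "odd (card {d\<in>P. (d \<in> Ot) \<noteq> bl d}) = (odd (card {d\<in>P. d \<in> Ot}) \<noteq> odd (card {d\<in>P. bl d}))"
      by (rule parity_xor[OF fin])
    ultimately show "even (card {d\<in>P. ((d \<in> Ot) \<noteq> bl d) \<noteq> (sigma (alpha d) \<in> Ot)})"
      using e c1 c2 by simp
  qed
  then obtain l where l: "\<forall>d\<in>D. l (sigma d) = (l d \<noteq> (sigma d \<in> Ot)) \<and> l (alpha d) = (l d \<noteq> ((d \<in> Ot) \<noteq> bl d))"
    by blast
  show ?thesis
  proof (cases "l z")
    case False then show ?thesis using l by blast
  next
    case True
    show ?thesis
      by (rule exI[where x="\<lambda>d. \<not> l d"]) (use l True in auto)
  qed
qed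

end

locale qlab = qcol D alpha sigma z bl for D :: "'d set" and alpha sigma :: "'d \<Rightarrow> 'd" and z :: 'd
  and bl :: "'d \<Rightarrow> bool" +
  fixes Ot :: "'d set" and l :: "'d \<Rightarrow> bool"
  assumes Ot: "Ot \<in> two_orientations D alpha sigma z"
    and eqS: "d \<in> D \<Longrightarrow> l (sigma d) = (l d \<noteq> (sigma d \<in> Ot))"
    and eqA: "d \<in> D \<Longrightarrow> l (alpha d) = (l d \<noteq> ((d \<in> Ot) \<noteq> bl d))"
    and lz: "\<not> l z"
begin

lemma eqI: "d \<in> D \<Longrightarrow> (l d \<noteq> l (inv sigma d)) = (d \<in> Ot)"
  using eqS[of "inv sigma d"] by auto

lemma eqC: "b \<in> D \<Longrightarrow> l (alpha (sigma b)) = (l b \<noteq> bl b)"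
  using eqA[of "sigma b"] eqS[of b] bl_s[of b] by auto

lemma const_orb:
  assumes x: "x \<in> D" and no: "orb sigma x \<inter> Ot = {}" and e: "e \<in> orb sigma x"
  shows "l e = l x"
proof -
  obtain n where n: "e = (sigma ^^ n) x" using e unfolding orb_def by blast
  have "l ((sigma ^^ n) x) = l x" for n
  proof (induct n)
    case 0 then show ?case by simp
  next
    case (Suc n)
    have xn: "(sigma ^^ n) x \<in> D" using funpow_permutes_in[OF sperm x] .
    have "(sigma ^^ Suc n) x \<notin> Ot" using no orb_funpow[where p=sigma and n="Suc n" and x=x] by blast
    then show ?case using eqS[OF xn] Suc by simp
  qed
  then show ?thesis using n by simp
qed

lemma gen1:
  assumes od: "od \<in> D" "od \<in> Ot" and nv: "orb sigma od \<noteq> S0" "orb sigma od \<noteq> S1"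
  shows "\<exists>k. 0 < k \<and> k < card (orb sigma od) \<and> (sigma ^^ k) od \<in> Ot \<and>
     (\<forall>j < card (orb sigma od). l ((sigma ^^ j) od) = (if j < k then l od else \<not> l od))"
proof -
  define n where "n = card (orb sigma od)"
  define SO where "SO = {e\<in>orb sigma od. e \<in> Ot}"
  have cSO: "card SO = 2" using TO_D(3)[OF Ot od(1) nv] SO_def by simp
  have oSO: "od \<in> SO" unfolding SO_def using od orb_self[where x=od and p=sigma] by simp
  have finSO: "finite SO" using SO_def sorb_fin by simp
  obtain od2 where od2: "od2 \<in> SO" "od2 \<noteq> od"
  proof -
    have "\<not> SO \<subseteq> {od}"
    proof
      assume "SO \<subseteq> {od}"
      then have "card SO \<le> 1" using card_mono[of "{od}" SO] by simp
      then show False using cSO by simp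
    qed
    then show ?thesis using that by blast
  qed
  have SOe: "SO = {od, od2}"
  proof -
    have "{od, od2} \<subseteq> SO" using oSO od2 by blast
    moreover have "card {od, od2} = 2" using od2 by simp
    ultimately show ?thesis using card_subset_eq[OF finSO] cSO by metis
  qed
  have n0: "0 < n" using sorb_enum(1)[OF od(1)] n_def by simp
  have inj: "inj_on (\<lambda>k. (sigma ^^ k) od) {..<n}" using sorb_enum(3)[OF od(1)] n_def by simp
  obtain k where k: "k < n" "od2 = (sigma ^^ k) od"
    using od2 SO_def sorb_enum(4)[OF od(1)] n_def by auto
  have k0: "k \<noteq> 0"
  proof
    assume "k = 0" then show False using k od2 by simp
  qed
  have mem: "(sigma ^^ j) od \<in> Ot \<longleftrightarrow> j = 0 \<or> j = k" if j: "j < n" for j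
  proof -
    have "(sigma ^^ j) od \<in> orb sigma od" by (rule orb_funpow)
    then have "(sigma ^^ j) od \<in> Ot \<longleftrightarrow> (sigma ^^ j) od \<in> SO" using SO_def by blast
    also have "\<dots> \<longleftrightarrow> (sigma ^^ j) od = (sigma ^^ 0) od \<or> (sigma ^^ j) od = (sigma ^^ k) od" using SOe k by auto
    also have "\<dots> \<longleftrightarrow> j = 0 \<or> j = k" using inj j n0 k(1) unfolding inj_on_def by blast
    finally show ?thesis .
  qed
  have pat: "l ((sigma ^^ j) od) = (if j < k then l od else \<not> l od)" if "j < n" for j
    using that
  proof (induct j)
    case 0 then show ?case using k0 by simp
  next
    case (Suc j)
    have xj: "(sigma ^^ j) od \<in> D" using funpow_permutes_in[OF sperm od(1)] .
    have "l ((sigma ^^ Suc j) od) = (l ((sigma ^^ j) od) \<noteq> ((sigma ^^ Suc j) od \<in> Ot))"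
      using eqS[OF xj] by simp
    also have "((sigma ^^ Suc j) od \<in> Ot) = (Suc j = k)" using mem[OF Suc(2)] by simp
    finally show ?case using Suc by auto
  qed
  show ?thesis
    using k0 k mem[OF k(1)] pat n_def by (intro exI[where x=k]) auto
qed

definition lab :: "'d \<Rightarrow> nat" where
  "lab d = (if d \<in> D then (if l d then 1 else 0) else undefined)"

lemma lab_eq: "d \<in> D \<Longrightarrow> e \<in> D \<Longrightarrow> (lab d = lab e) = (l d = l e)"
  unfolding lab_def by auto

lemma psi_lab: "Psi lab = Ot"
proof -
  have "{d\<in>D. lab d \<noteq> lab (inv sigma d)} = {d\<in>D. d \<in> Ot}"
  proof (rule Collect_cong)
    fix d show "(d \<in> D \<and> lab d \<noteq> lab (inv sigma d)) = (d \<in> D \<and> d \<in> Ot)"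
    proof (cases "d \<in> D")
      case True
      then have "(lab d \<noteq> lab (inv sigma d)) = (l d \<noteq> l (inv sigma d))" using lab_eq by simp
      then show ?thesis using eqI[OF True] True by simp
    qed simp
  qed
  then have "Psi lab = {d\<in>D. d \<in> Ot}" unfolding Psi_def .
  then show ?thesis using TO_D(1)[OF Ot] by auto
qed

end

context qlab
begin

lemma inv_s_mem: "x \<in> D \<Longrightarrow> inv sigma x \<in> orb sigma x"
  using sorb_inv sorb_iff by blast

lemma outer_vals:
  "l (alpha ((phi ^^ 3) z)) = False" "l (alpha z) = True" "l (alpha (phi z)) = True"
  "l (alpha ((phi ^^ 2) z)) = False" "l ((phi ^^ 2) z) = True"
proof -
  define b0 where "b0 = alpha ((phi ^^ 3) z)"
  have z3: "(phi ^^ 3) z \<in> D" using funpow_permutes_in[OF pperm zD] .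
  have z2: "(phi ^^ 2) z \<in> D" using funpow_permutes_in[OF pperm zD] .
  have b0D: "b0 \<in> D" using b0_def z3 by simp
  have sb0: "sigma b0 = z"
  proof -
    have "sigma b0 = phi ((phi ^^ 3) z)" using b0_def s_a_phi by simp
    also have "\<dots> = (phi ^^ 4) z" by (simp add: numeral_eq_Suc)
    finally show ?thesis using phi4[OF zD] by simp
  qed
  have "b0 = inv sigma z" using sb0 by (metis si_s s_si permutes_inj[OF sperm] inj_eq)
  then have b0S: "b0 \<in> orb sigma z" using inv_s_mem zD by simp
  have lb0: "l b0 = False" using const_orb[OF zD _ b0S] TO_S01(1)[OF Ot] lz by simp
  have blb0: "bl b0" using b0_def bl_a[OF z3] bl_phin[OF zD, of 3] bl_z by simp
  show "l (alpha ((phi ^^ 3) z)) = False" using lb0 b0_def by simp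
  have az: "l (alpha z) = True" using eqC[OF b0D] sb0 lb0 blb0 by simp
  then show "l (alpha z) = True" .
  have az1: "l (alpha (phi z)) = True"
    using eqC[of "alpha z"] zD az bl_a[OF zD] bl_z by (simp add: s_a_phi)
  then show "l (alpha (phi z)) = True" .
  have pz: "phi z \<in> D" using zD by simp
  have e2: "sigma (alpha (phi z)) = (phi ^^ 2) z" by (simp add: s_a_phi numeral_eq_Suc)
  have "l (alpha ((phi ^^ 2) z)) = (l (alpha (phi z)) \<noteq> bl (alpha (phi z)))"
    using eqC[of "alpha (phi z)"] pz e2 by simp
  then show "l (alpha ((phi ^^ 2) z)) = False" using az1 bl_a[OF pz] bl_phi[OF zD] bl_z by simp
  have "alpha (phi z) = inv sigma ((phi ^^ 2) z)" using e2 by (metis si_s s_si permutes_inj[OF sperm] inj_eq)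
  then have "alpha (phi z) \<in> orb sigma ((phi ^^ 2) z)" using inv_s_mem z2 by simp
  then have "l (alpha (phi z)) = l ((phi ^^ 2) z)" using const_orb[OF z2] TO_S01(2)[OF Ot] by simp
  then show "l ((phi ^^ 2) z) = True" using az1 by simp
qed

end

context qlab
begin

lemma lab_G1:
  assumes v: "v \<in> D" and nv: "orb sigma v \<noteq> S0" "orb sigma v \<noteq> S1"
  shows "\<exists>d\<in>orb sigma v. \<exists>k. 0 < k \<and> k < card (orb sigma v) \<and>
             (\<forall>j < card (orb sigma v). lab ((sigma ^^ j) d) = (if j < k then 1 else 0))"
proof -
  have c2: "card {e\<in>orb sigma v. e \<in> Ot} = 2" using TO_D(3)[OF Ot v nv] .
  then obtain od where od: "od \<in> orb sigma v" "od \<in> Ot"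
    by (metis (no_types, lifting) card.empty empty_Collect_eq zero_neq_numeral)
  have odD: "od \<in> D" using od sorb_sub[OF v] by blast
  have So: "orb sigma od = orb sigma v" using od sorb_iff by blast
  have good: "\<exists>d\<in>orb sigma v. \<exists>k. 0 < k \<and> k < card (orb sigma v) \<and>
             (\<forall>j < card (orb sigma v). lab ((sigma ^^ j) d) = (if j < k then 1 else 0))"
    if d: "d \<in> orb sigma v" "d \<in> Ot" "l d" for d
  proof -
    have dD: "d \<in> D" using d sorb_sub[OF v] by blast
    have Sd: "orb sigma d = orb sigma v" using d sorb_iff by blast
    obtain k where k: "0 < k" "k < card (orb sigma d)"
      and pat: "\<forall>j < card (orb sigma d). l ((sigma ^^ j) d) = (if j < k then l d else \<not> l d)"
      using gen1[OF dD d(2)] Sd nv by auto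
    have H: "\<forall>j < card (orb sigma v). lab ((sigma ^^ j) d) = (if j < k then 1 else 0)"
    proof (intro allI impI)
      fix j assume j: "j < card (orb sigma v)"
      have "(sigma ^^ j) d \<in> D" using funpow_permutes_in[OF sperm dD] .
      then show "lab ((sigma ^^ j) d) = (if j < k then 1 else 0)"
        using pat j Sd d(3) unfolding lab_def by auto
    qed
    have kk: "0 < k \<and> k < card (orb sigma v) \<and>
             (\<forall>j < card (orb sigma v). lab ((sigma ^^ j) d) = (if j < k then 1 else 0))"
      using k Sd H by simp
    show ?thesis
    proof (rule bexI[OF _ d(1)])
      show "\<exists>k. 0 < k \<and> k < card (orb sigma v) \<and>
             (\<forall>j < card (orb sigma v). lab ((sigma ^^ j) d) = (if j < k then 1 else 0))"
        by (rule exI[where x=k]) (rule kk)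
    qed
  qed
  show ?thesis
  proof (cases "l od")
    case True then show ?thesis using good od by blast
  next
    case False
    obtain k where k: "0 < k" "k < card (orb sigma od)" "(sigma ^^ k) od \<in> Ot"
      and pat: "\<forall>j < card (orb sigma od). l ((sigma ^^ j) od) = (if j < k then l od else \<not> l od)"
      using gen1[OF odD od(2)] So nv by auto
    have "l ((sigma ^^ k) od)" using pat k False by auto
    moreover have "(sigma ^^ k) od \<in> orb sigma v" using So orb_funpow by metis
    ultimately show ?thesis using good k(3) by blast
  qed
qed

lemma lab_G3:
  assumes P: "P \<in> FS" "P \<noteq> orb phi z"
  shows "\<exists>f\<in>P. lab (alpha f) = 0 \<and> lab (alpha (phi f)) = 0
                 \<and> lab (alpha ((phi ^^ 2) f)) = 1 \<and> lab (alpha ((phi ^^ 3) f)) = 1"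
proof -
  obtain d0 where d0: "d0 \<in> D" "P = orb phi d0" using FS_cases P(1) by blast
  define f where "f = (if bl d0 then d0 else phi d0)"
  have fD: "f \<in> D" using f_def d0 by simp
  have blf: "bl f" using f_def bl_phi[OF d0(1)] by auto
  have fP: "f \<in> P" using f_def d0 orb_self orb_funpow[where n=1 and p=phi] by auto
  have Pf: "orb phi f = P" using fP porb_iff d0 by blast
  define L where "L j = l (alpha ((phi ^^ j) f))" for j
  have step: "L (Suc j) = (L j \<noteq> odd j)" for j
  proof -
    have fj: "(phi ^^ j) f \<in> D" using funpow_permutes_in[OF pperm fD] .
    have "sigma (alpha ((phi ^^ j) f)) = (phi ^^ Suc j) f" by (simp add: s_a_phi)
    then have "L (Suc j) = (L j \<noteq> bl (alpha ((phi ^^ j) f)))"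
      using eqC[of "alpha ((phi ^^ j) f)"] fj unfolding L_def by simp
    then show ?thesis using bl_a[OF fj] bl_phin[OF fD, of j] blf by simp
  qed
  have L1: "L 1 = L 0" using step[of 0] by simp
  have L2: "L 2 = (\<not> L 1)" using step[of 1] by (simp add: numeral_eq_Suc)
  have L3: "L 3 = L 2" using step[of 2] by (simp add: numeral_eq_Suc)
  have L4: "L 4 = L 0" using phi4[OF fD] unfolding L_def by simp
  have L5: "L 5 = L 1"
  proof -
    have "(phi ^^ 5) f = phi ((phi ^^ 4) f)" by (simp add: numeral_eq_Suc)
    then show ?thesis using phi4[OF fD] unfolding L_def by simp
  qed
  have labL: "lab (alpha ((phi ^^ j) f)) = (if L j then 1 else 0)" for j
    using funpow_permutes_in[OF pperm fD, of j] unfolding lab_def L_def by simp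
  show ?thesis
  proof (cases "L 0")
    case False
    have "lab (alpha f) = 0" "lab (alpha (phi f)) = 0" "lab (alpha ((phi ^^ 2) f)) = 1" "lab (alpha ((phi ^^ 3) f)) = 1"
      using labL[of 0] labL[of 1] labL[of 2] labL[of 3] L1 L2 L3 False by simp_all
    then show ?thesis using fP by blast
  next
    case True
    define g where "g = (phi ^^ 2) f"
    have gP: "g \<in> P" using g_def Pf orb_funpow by metis
    have g1: "phi g = (phi ^^ 3) f" using g_def by (simp add: numeral_eq_Suc)
    have g2: "(phi ^^ 2) g = (phi ^^ 4) f" using g_def by (simp add: numeral_eq_Suc)
    have g3: "(phi ^^ 3) g = (phi ^^ 5) f" using g_def by (simp add: numeral_eq_Suc)
    have "lab (alpha g) = 0" "lab (alpha (phi g)) = 0" "lab (alpha ((phi ^^ 2) g)) = 1" "lab (alpha ((phi ^^ 3) g)) = 1"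
      unfolding g1 g2 g3 using g_def labL[of 2] labL[of 3] labL[of 4] labL[of 5] L1 L2 L3 L4 L5 True by simp_all
    then show ?thesis using gP by blast
  qed
qed

lemma lab_SL: "lab \<in> SL"
  unfolding strong_labelings_def Let_def s0_vertex_def s1_vertex_def outer_face_def mem_Collect_eq
proof (intro conjI)
  show "lab \<in> D \<rightarrow>\<^sub>E {0, 1}" unfolding lab_def by (auto simp: PiE_iff extensional_def split: if_splits)
  show "\<forall>e\<in>D. (orb sigma e = S0 \<longrightarrow> lab e = 0) \<and> (orb sigma e = S1 \<longrightarrow> lab e = 1)"
  proof (intro ballI conjI impI)
    fix e assume e: "e \<in> D"
    {
      assume "orb sigma e = S0"
      then have "e \<in> orb sigma z" using sorb_iff by blast
      then have "l e = l z" using const_orb[OF zD] TO_S01(1)[OF Ot] by blast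
      then show "lab e = 0" using lz e unfolding lab_def by simp
    }
    {
      assume "orb sigma e = S1"
      then have "e \<in> S1" using sorb_iff by blast
      moreover have z2: "(phi ^^ 2) z \<in> D" using funpow_permutes_in[OF pperm zD] .
      ultimately have "l e = l ((phi ^^ 2) z)" using const_orb[OF z2] TO_S01(2)[OF Ot] by blast
      then show "lab e = 1" using outer_vals(5) e unfolding lab_def by simp
    }
  qed
  show "\<forall>v\<in>D. orb sigma v \<noteq> S0 \<and> orb sigma v \<noteq> S1 \<longrightarrow>
          (\<exists>d\<in>orb sigma v. \<exists>k. 0 < k \<and> k < card (orb sigma v) \<and>
             (\<forall>j < card (orb sigma v). lab ((sigma ^^ j) d) = (if j < k then 1 else 0)))"
    using lab_G1 by blast
  show "\<forall>d\<in>D. (lab d = lab (inv sigma d)) \<noteq> (lab (alpha d) = lab (inv sigma (alpha d)))"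
  proof
    fix d assume d: "d \<in> D"
    have ad: "alpha d \<in> D" using d by simp
    have "(lab d = lab (inv sigma d)) = (d \<notin> Ot)" using eqI[OF d] lab_eq[OF d, of "inv sigma d"] d by auto
    moreover have "(lab (alpha d) = lab (inv sigma (alpha d))) = (alpha d \<notin> Ot)"
      using eqI[OF ad] lab_eq[OF ad, of "inv sigma (alpha d)"] ad by auto
    ultimately show "(lab d = lab (inv sigma d)) \<noteq> (lab (alpha d) = lab (inv sigma (alpha d)))"
      using TO_D(2)[OF Ot d] by simp
  qed
  show "\<forall>F\<in>FS. F \<noteq> orb phi z \<longrightarrow>
          (\<exists>f\<in>F. lab (alpha f) = 0 \<and> lab (alpha (phi f)) = 0
                 \<and> lab (alpha ((phi ^^ 2) f)) = 1 \<and> lab (alpha ((phi ^^ 3) f)) = 1)"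
    using lab_G3 by blast
  have z3: "(phi ^^ 3) z \<in> D" "(phi ^^ 2) z \<in> D" "phi z \<in> D"
    using funpow_permutes_in[OF pperm zD] zD by simp_all
  show "lab (alpha ((phi ^^ 3) z)) = 0" using outer_vals(1) z3 unfolding lab_def by simp
  show "lab (alpha ((phi ^^ 2) z)) = 0" using outer_vals(4) z3 unfolding lab_def by simp
  show "lab (alpha (phi z)) = 1" using outer_vals(3) z3 unfolding lab_def by simp
  show "lab (alpha z) = 1" using outer_vals(2) zD unfolding lab_def by simp
qed

end

context qcol
begin

lemma psi_surj:
  assumes Ot: "Ot \<in> TO"
  shows "\<exists>lb\<in>SL. Psi lb = Ot"
proof -
  obtain l where l: "\<forall>d\<in>D. l (sigma d) = (l d \<noteq> (sigma d \<in> Ot)) \<and> l (alpha d) = (l d \<noteq> ((d \<in> Ot) \<noteq> bl d))"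
    and lz: "\<not> l z"
    using exists_lab[OF Ot] by blast
  interpret L: qlab D alpha sigma z bl Ot l
    by (unfold_locales) (use Ot l lz in auto)
  show ?thesis using L.lab_SL L.psi_lab by blast
qed

lemma psi_bij: "bij_betw Psi SL TO"
  unfolding bij_betw_def
proof
  show "inj_on Psi SL" by (rule psi_inj)
  show "Psi ` SL = TO"
  proof
    show "Psi ` SL \<subseteq> TO" using psi_TO by blast
    show "TO \<subseteq> Psi ` SL" using psi_surj by blast
  qed
qed

end

theorem corollary24:
  fixes D :: "'d set" and alpha sigma :: "'d \<Rightarrow> 'd" and z :: 'd
  assumes "is_quadrangulation D alpha sigma z"
  shows "\<exists>f. bij_betw f (two_orientations D alpha sigma z) (strong_labelings D alpha sigma z)"
proof -
  interpret qmap D alpha sigma z by (rule qmap.intro) (rule assms)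
  obtain bl where bl: "\<forall>d\<in>D. bl (sigma d) = bl d \<and> bl (alpha d) = (\<not> bl d)" "bl z"
    using black_ex by blast
  interpret qcol D alpha sigma z bl
    by (unfold_locales) (use bl in auto)
  have "bij_betw (inv_into SL Psi) TO SL" using bij_betw_inv_into[OF psi_bij] .
  then show ?thesis by blast
qed


end
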